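(* For every $t\in\mathbb C$, $$\phi_{t,-t}\odot\phi_{1,t-2}=\frac{1}{\Gamma(t+1)}\,\delta_1,$$ where $\delta_1$ is the Dirac mass at $1$.
   Context: For $a\in\mathbb C$, $\phi_a(u)=u_+^a/\Gamma(a+1)$ is the distribution on $\mathbb R$ supported on $[0,\infty)$, defined for $\operatorname{Re}a>-1$ as a locally integrable function and for other $a$ by analytic continuation in $a$. For $a,b\in\mathbb C$, $\phi_{ab}(u)=\phi_a(u)\phi_b(1-u)$, a distribution supported on $[0,1]$. For compactly supported distributions $A,B$ on $\mathbb R$, the pseudoconvolution $A\odot B$ is the distribution defined by $\langle A\odot B,\psi\rangle=\langle A(y_1)\otimes B(y_2),\psi(y_1y_2)\rangle$ for smooth test functions $\psi$. *)

theory Defs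
  imports "HOL-Analysis.Analysis"
begin

definition smooth_fun :: "(real \<Rightarrow> complex) \<Rightarrow> bool" where
  "smooth_fun f \<longleftrightarrow> (\<exists>D :: nat \<Rightarrow> real \<Rightarrow> complex. D 0 = f \<and>
      (\<forall>n x. (D n has_vector_derivative D (Suc n) x) (at x)))"

definition test_fun :: "(real \<Rightarrow> complex) \<Rightarrow> bool" where
  "test_fun f \<longleftrightarrow> smooth_fun f \<and> compact (closure {x. f x \<noteq> 0})"

text \<open>For Re a > -1 and Re b > -1, phi_{ab} is the locally integrable function
  u_+^a (1-u)_+^b / (Gamma(a+1) Gamma(b+1)), supported on [0,1]; pairing with a
  smooth function psi.  (rGamma is the entire reciprocal Gamma function.)\<close>
definition phi2_int :: "complex \<Rightarrow> complex \<Rightarrow> (real \<Rightarrow> complex) \<Rightarrow> complex" where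
  "phi2_int a b \<psi> = integral {0<..<1}
     (\<lambda>u. (complex_of_real u powr a) * (complex_of_real (1 - u) powr b)
           * rGamma (a + 1) * rGamma (b + 1) * \<psi> u)"

text \<open>For general a, b: analytic continuation in (a,b), i.e. the value at (a,b) of
  the (unique) function, entire in each variable separately, which agrees with
  phi2_int on Re a > -1, Re b > -1.  phi2 a b is the compactly supported distribution
  phi_{ab}, acting on all smooth functions.\<close>
definition phi2 :: "complex \<Rightarrow> complex \<Rightarrow> (real \<Rightarrow> complex) \<Rightarrow> complex" where
  "phi2 a b \<psi> = (THE v. \<exists>G :: complex \<Rightarrow> complex \<Rightarrow> complex.
      (\<forall>b'. (\<lambda>a'. G a' b') holomorphic_on UNIV) \<and>
      (\<forall>a'. G a' holomorphic_on UNIV) \<and>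
      (\<forall>a' b'. Re a' > -1 \<and> Re b' > -1 \<longrightarrow> G a' b' = phi2_int a' b' \<psi>) \<and>
      v = G a b)"

text \<open>Pseudoconvolution of compactly supported distributions:
  <A \<odot> B, psi> = <A(y1) \<otimes> B(y2), psi(y1 y2)> = <A(y1), <B(y2), psi(y1 y2)>>.\<close>
definition pconv :: "((real \<Rightarrow> complex) \<Rightarrow> complex) \<Rightarrow> ((real \<Rightarrow> complex) \<Rightarrow> complex)
    \<Rightarrow> (real \<Rightarrow> complex) \<Rightarrow> complex" where
  "pconv A B \<psi> = A (\<lambda>y1. B (\<lambda>y2. \<psi> (y1 * y2)))"

end

theory Submission
  imports Defs "HOL-Complex_Analysis.Complex_Analysis"
begin


definition wgt :: "complex \<Rightarrow> complex \<Rightarrow> real \<Rightarrow> complex" where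
  "wgt a b u = (complex_of_real u powr a) * (complex_of_real (1 - u) powr b)
      * rGamma (a + 1) * rGamma (b + 1)"

lemma phi2_int_wgt: "phi2_int a b f = integral {0<..<1} (\<lambda>u. wgt a b u * f u)"
  by (simp add: phi2_int_def wgt_def)

lemma cpow_pos: "u > 0 \<Longrightarrow> complex_of_real u powr a = exp (a * of_real (ln u))"
  by (simp add: powr_def Ln_of_real)

lemma norm_cpow: "u \<ge> 0 \<Longrightarrow> norm (complex_of_real u powr a) = u powr Re a"
  by (simp add: norm_powr_real_powr)

lemma cpow_add1: "u > 0 \<Longrightarrow> complex_of_real u powr (a + 1) = of_real u * of_real u powr a"
  by (simp add: cpow_pos distrib_right exp_add exp_of_real)

lemma cpow_minus1: "u > 0 \<Longrightarrow> complex_of_real u powr a = of_real u * of_real u powr (a - 1)"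
  using cpow_add1[of u "a - 1"] by simp

lemma wgt_rec_a: "0 < u \<Longrightarrow> (a + 1) * wgt (a + 1) b u = of_real u * wgt a b u"
proof -
  assume u: "0 < u"
  have g: "(a + 1) * rGamma (a + 1 + 1) = rGamma (a + 1)" by (rule rGamma_plus1)
  define A where "A = complex_of_real u powr a"
  define B where "B = complex_of_real (1 - u) powr b"
  define G where "G = rGamma (a + 1 + 1)"
  have A1: "complex_of_real u powr (a + 1) = of_real u * A" using u by (simp add: A_def cpow_add1)
  have "(a + 1) * wgt (a + 1) b u = (of_real u * A) * B * ((a + 1) * G) * rGamma (b + 1)"
    unfolding wgt_def A1 B_def G_def by (simp add: mult_ac)
  also have "\<dots> = of_real u * wgt a b u" unfolding G_def g wgt_def A_def B_def by (simp add: mult_ac)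
  finally show ?thesis .
qed

lemma wgt_rec_b: "u < 1 \<Longrightarrow> (b + 1) * wgt a (b + 1) u = of_real (1 - u) * wgt a b u"
proof -
  assume u: "u < 1"
  have g: "(b + 1) * rGamma (b + 1 + 1) = rGamma (b + 1)" by (rule rGamma_plus1)
  define A where "A = complex_of_real u powr a"
  define B where "B = complex_of_real (1 - u) powr b"
  define G where "G = rGamma (b + 1 + 1)"
  have B1: "complex_of_real (1 - u) powr (b + 1) = of_real (1 - u) * B" unfolding B_def by (rule cpow_add1) (use u in simp)
  have "(b + 1) * wgt a (b + 1) u = A * (of_real (1 - u) * B) * rGamma (a + 1) * ((b + 1) * G)"
    unfolding wgt_def B1 A_def G_def by (simp add: mult_ac)
  also have "\<dots> = of_real (1 - u) * wgt a b u" unfolding G_def g wgt_def A_def B_def by (simp add: mult_ac)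
  finally show ?thesis .
qed

lemma wgt_sum: "0 < u \<Longrightarrow> u < 1 \<Longrightarrow>
   wgt a b u = (a + 1) * wgt (a + 1) b u + (b + 1) * wgt a (b + 1) u"
proof -
  assume u: "0 < u" "u < 1"
  have "(a + 1) * wgt (a + 1) b u + (b + 1) * wgt a (b + 1) u
      = of_real u * wgt a b u + of_real (1 - u) * wgt a b u"
    using wgt_rec_a[OF u(1)] wgt_rec_b[OF u(2)] by simp
  also have "\<dots> = (of_real u + of_real (1 - u)) * wgt a b u" by (simp only: distrib_right)
  also have "\<dots> = wgt a b u" by simp
  finally show ?thesis by simp
qed

lemma cpow_deriv:
  assumes "u > 0"
  shows "((\<lambda>u. complex_of_real u powr c) has_vector_derivative (c * of_real u powr (c - 1))) (at u)"
proof -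
  have "of_real u \<notin> \<real>\<^sub>\<le>\<^sub>0" using assms by (auto simp: complex_nonpos_Reals_iff)
  from has_field_derivative_powr[OF this, of c]
  show ?thesis by (rule has_vector_derivative_real_field)
qed

lemma cpow1m_deriv:
  assumes "u < 1"
  shows "((\<lambda>u. complex_of_real (1 - u) powr c) has_vector_derivative (- (c * of_real (1 - u) powr (c - 1)))) (at u)"
proof -
  have d1: "((\<lambda>u. 1 - u) has_vector_derivative (-1)) (at u)"
    by (auto intro!: derivative_eq_intros simp: has_real_derivative_iff_has_vector_derivative[symmetric])
  have d2: "((\<lambda>s. complex_of_real s powr c) has_vector_derivative (c * of_real (1 - u) powr (c - 1))) (at (1 - u))"
    using cpow_deriv[of "1 - u" c] assms by simp
  from vector_diff_chain_at[OF d1 d2] show ?thesis by (simp add: o_def)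
qed

lemma wgt_deriv:
  assumes "0 < u" "u < 1"
  shows "((\<lambda>u. wgt (a + 1) (b + 1) u) has_vector_derivative (wgt a (b + 1) u - wgt (a + 1) b u)) (at u)"
proof -
  have ra: "(a + 1) * rGamma (a + 1 + 1) = rGamma (a + 1)" by (rule rGamma_plus1)
  have rb: "(b + 1) * rGamma (b + 1 + 1) = rGamma (b + 1)" by (rule rGamma_plus1)
  have "((\<lambda>u. complex_of_real u powr (a + 1) * complex_of_real (1 - u) powr (b + 1)
      * rGamma (a + 1 + 1) * rGamma (b + 1 + 1)) has_vector_derivative
     ((of_real u powr (a + 1) * (- ((b + 1) * of_real (1 - u) powr (b + 1 - 1)))
      + ((a + 1) * of_real u powr (a + 1 - 1)) * of_real (1 - u) powr (b + 1))
      * rGamma (a + 1 + 1) * rGamma (b + 1 + 1))) (at u)"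
    by (intro has_vector_derivative_mult_left has_vector_derivative_mult cpow_deriv cpow1m_deriv assms)
  moreover have "(of_real u powr (a + 1) * (- ((b + 1) * of_real (1 - u) powr (b + 1 - 1)))
      + ((a + 1) * of_real u powr (a + 1 - 1)) * of_real (1 - u) powr (b + 1))
      * rGamma (a + 1 + 1) * rGamma (b + 1 + 1) = wgt a (b + 1) u - wgt (a + 1) b u"
  proof -
    define A where "A = complex_of_real u powr a"
    define B where "B = complex_of_real (1 - u) powr b"
    define A1 where "A1 = complex_of_real u powr (a + 1)"
    define B1 where "B1 = complex_of_real (1 - u) powr (b + 1)"
    define ga where "ga = rGamma (a + 1 + 1)"
    define gb where "gb = rGamma (b + 1 + 1)"
    have e: "wgt a (b + 1) u = A * B1 * ((a + 1) * ga) * gb" "wgt (a + 1) b u = A1 * B * ga * ((b + 1) * gb)"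
      unfolding wgt_def A_def B_def A1_def B1_def ga_def gb_def ra rb by simp_all
    have "(of_real u powr (a + 1) * (- ((b + 1) * of_real (1 - u) powr (b + 1 - 1)))
      + ((a + 1) * of_real u powr (a + 1 - 1)) * of_real (1 - u) powr (b + 1))
      * rGamma (a + 1 + 1) * rGamma (b + 1 + 1) = (A1 * (- ((b + 1) * B)) + ((a + 1) * A) * B1) * ga * gb"
      unfolding A_def B_def A1_def B1_def ga_def gb_def by simp
    also have "\<dots> = A * B1 * ((a + 1) * ga) * gb - A1 * B * ga * ((b + 1) * gb)"
      by (simp add: algebra_simps)
    finally show ?thesis unfolding e .
  qed
  ultimately show ?thesis unfolding wgt_def by simp
qed



lemma integral_cmul_c:
  fixes f :: "real \<Rightarrow> complex"
  shows "f integrable_on S \<Longrightarrow> integral S (\<lambda>x. c * f x) = c * integral S f"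
  by (rule integral_unique, rule has_integral_mult_right, simp add: integrable_integral)

lemma norm_wgt: "0 \<le> u \<Longrightarrow> u \<le> 1 \<Longrightarrow>
  norm (wgt a b u) = u powr Re a * (1 - u) powr Re b * norm (rGamma (a + 1)) * norm (rGamma (b + 1))"
  unfolding wgt_def norm_mult using norm_cpow[of u a] norm_cpow[of "1 - u" b] by simp

lemma cont_wgt_open: "continuous_on {0<..<1} (wgt a b)"
  unfolding wgt_def by (intro continuous_intros) auto

lemma cont_wgt_closed: "Re a > 0 \<Longrightarrow> Re b > 0 \<Longrightarrow> continuous_on {0..1} (wgt a b)"
  unfolding wgt_def by (intro continuous_intros) auto

lemma wgt_integrable:
  assumes "Re a > -1" "Re b > -1" "continuous_on {0..1} f"
  shows "(\<lambda>u. wgt a b u * f u) integrable_on {0<..<1}"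
proof -
  obtain M where M: "M \<ge> 0" "\<And>u. u \<in> {0..1} \<Longrightarrow> norm (f u) \<le> M"
    using continuous_on_compact_bound[OF compact_Icc assms(3)] by blast
  define C where "C = norm (rGamma (a + 1)) * norm (rGamma (b + 1))"
  have "((\<lambda>u. u powr (Re a + 1 - 1) * (1 - u) powr (Re b + 1 - 1)) has_integral Beta (Re a + 1) (Re b + 1)) {0..1}"
    using assms by (intro has_integral_Beta_real) auto
  then have bi: "(\<lambda>u. u powr Re a * (1 - u) powr Re b) integrable_on {0<..<1}"
    by (auto simp: integrable_on_def has_integral_Icc_iff_Ioo)
  have gi: "(\<lambda>u. (M * C) * (u powr Re a * (1 - u) powr Re b)) integrable_on {0<..<1}"
    using bi by (rule integrable_on_mult_right)
  have "continuous_on {0<..<1} (\<lambda>u. wgt a b u * f u)"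
    by (intro continuous_intros cont_wgt_open continuous_on_subset[OF assms(3)]) auto
  then have meas: "(\<lambda>u. wgt a b u * f u) \<in> borel_measurable (lebesgue_on {0<..<1})"
    by (intro continuous_imp_measurable_on_sets_lebesgue) auto
  have "(\<lambda>u. wgt a b u * f u) absolutely_integrable_on {0<..<1}"
  proof (rule measurable_bounded_by_integrable_imp_absolutely_integrable[OF meas _ gi])
    show "{0<..<(1::real)} \<in> sets lebesgue" by (intro fmeasurableD lmeasurable_open) auto
    fix u :: real assume u: "u \<in> {0<..<1}"
    have "norm (wgt a b u * f u) = u powr Re a * (1 - u) powr Re b * C * norm (f u)"
      using u by (simp add: norm_mult norm_wgt C_def)
    also have "\<dots> \<le> u powr Re a * (1 - u) powr Re b * C * M"
      by (intro mult_left_mono M(2)) (use u in \<open>auto simp: C_def\<close>)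
    finally show "norm (wgt a b u * f u) \<le> (M * C) * (u powr Re a * (1 - u) powr Re b)"
      by (simp add: mult_ac)
  qed
  then show ?thesis using absolutely_integrable_on_def by blast
qed

lemma phi2_int_sum:
  assumes "Re a > -1" "Re b > -1" "continuous_on {0..1} f"
  shows "phi2_int a b f = (a + 1) * phi2_int (a + 1) b f + (b + 1) * phi2_int a (b + 1) f"
proof -
  have i1: "(\<lambda>u. wgt (a + 1) b u * f u) integrable_on {0<..<1}"
    by (rule wgt_integrable) (use assms in auto)
  have i2: "(\<lambda>u. wgt a (b + 1) u * f u) integrable_on {0<..<1}"
    by (rule wgt_integrable) (use assms in auto)
  have "phi2_int a b f = integral {0<..<1}
      (\<lambda>u. (a + 1) * (wgt (a + 1) b u * f u) + (b + 1) * (wgt a (b + 1) u * f u))"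
    unfolding phi2_int_wgt
  proof (rule integral_cong)
    fix u :: real assume u: "u \<in> {0<..<1}"
    then show "wgt a b u * f u = (a + 1) * (wgt (a + 1) b u * f u) + (b + 1) * (wgt a (b + 1) u * f u)"
      using wgt_sum[of u a b] by (simp add: algebra_simps)
  qed
  also have "\<dots> = (a + 1) * phi2_int (a + 1) b f + (b + 1) * phi2_int a (b + 1) f"
    unfolding phi2_int_wgt
    by (subst integral_add) (auto intro: integrable_on_mult_right i1 i2 simp: integral_cmul_c i1 i2)
  finally show ?thesis .
qed

lemma phi2_int_ibp:
  assumes "Re a > -1" "Re b > -1" "continuous_on {0..1} f" "continuous_on {0..1} f'"
    and der: "\<And>u. (f has_vector_derivative f' u) (at u)"
  shows "phi2_int (a + 1) b f = phi2_int a (b + 1) f + phi2_int (a + 1) (b + 1) f'"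
proof -
  define H where "H u = wgt (a + 1) (b + 1) u * f u" for u
  define H' where "H' u = wgt a (b + 1) u * f u - wgt (a + 1) b u * f u + wgt (a + 1) (b + 1) u * f' u" for u
  have contH: "continuous_on {0..1} H"
    unfolding H_def by (intro continuous_intros cont_wgt_closed assms) (use assms in auto)
  have "(H' has_integral (H 1 - H 0)) {0..1}"
  proof (rule fundamental_theorem_of_calculus_interior[OF _ contH])
    fix u :: real assume u: "u \<in> {0<..<1}"
    have "((\<lambda>u. wgt (a + 1) (b + 1) u * f u) has_vector_derivative
        (wgt (a + 1) (b + 1) u * f' u + (wgt a (b + 1) u - wgt (a + 1) b u) * f u)) (at u)"
      by (intro has_vector_derivative_mult wgt_deriv der) (use u in auto)
    then show "(H has_vector_derivative H' u) (at u)"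
      unfolding H_def H'_def by (simp add: algebra_simps)
  qed simp
  moreover have "H 1 = 0" "H 0 = 0" unfolding H_def wgt_def by simp_all
  ultimately have "(H' has_integral 0) {0<..<1}" by (simp add: has_integral_Icc_iff_Ioo)
  then have z: "integral {0<..<1} H' = 0" by blast
  have i1: "(\<lambda>u. wgt a (b + 1) u * f u) integrable_on {0<..<1}"
    by (rule wgt_integrable) (use assms in auto)
  have i2: "(\<lambda>u. wgt (a + 1) b u * f u) integrable_on {0<..<1}"
    by (rule wgt_integrable) (use assms in auto)
  have i3: "(\<lambda>u. wgt (a + 1) (b + 1) u * f' u) integrable_on {0<..<1}"
    by (rule wgt_integrable) (use assms in auto)
  have "integral {0<..<1} H' = phi2_int a (b + 1) f - phi2_int (a + 1) b f + phi2_int (a + 1) (b + 1) f'"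
    unfolding H'_def phi2_int_wgt
    by (subst integral_add, intro integrable_diff i1 i2 i3, rule i3, subst integral_diff, rule i1, rule i2, rule refl)
  with z show ?thesis by (simp add: algebra_simps)
qed

definition dseq :: "(nat \<Rightarrow> real \<Rightarrow> complex) \<Rightarrow> bool" where
  "dseq D \<longleftrightarrow> (\<forall>n x. (D n has_vector_derivative D (Suc n) x) (at x))"

lemma dseqD: "dseq D \<Longrightarrow> (D n has_vector_derivative D (Suc n) x) (at x)"
  unfolding dseq_def by blast

lemma dseq_cont: "dseq D \<Longrightarrow> continuous_on S (D n)"
  by (rule continuous_on_vector_derivative, rule has_vector_derivative_at_within, erule dseqD)

lemma dseq_shift: "dseq D \<Longrightarrow> dseq (\<lambda>k. D (Suc k))"
  unfolding dseq_def by blast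

lemma smooth_fun_dseq: "smooth_fun f \<longleftrightarrow> (\<exists>D. D 0 = f \<and> dseq D)"
  unfolding smooth_fun_def dseq_def by blast

lemma alg_C1:
  fixes I X Y Z W V Z2 a b :: complex
  assumes "I = (a + 1) * X + (b + 1) * Y" "X = Y + Z" "Y = (a + 1) * W + (b + 2) * V" "W = V + Z2"
  shows "I = (a + b + 2) * (a + b + 3) * W - (a + b + 2) * (b + 2) * Z2 + (a + 1) * Z"
  using assms by algebra

lemma phi2_int_C1:
  assumes D: "dseq D" and ab: "Re a > -1" "Re b > -1"
  shows "phi2_int a b (D 0) = (a + b + 2) * (a + b + 3) * phi2_int (a + 1) (b + 1) (D 0)
     - (a + b + 2) * (b + 2) * phi2_int (a + 1) (b + 2) (D 1) + (a + 1) * phi2_int (a + 1) (b + 1) (D 1)"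
proof -
  have c0: "continuous_on {0..1} (D 0)" and c1: "continuous_on {0..1} (D 1)" using dseq_cont[OF D] by auto
  have der: "\<And>u. (D 0 has_vector_derivative D 1 u) (at u)" using dseqD[OF D, of 0] by simp
  have bb: "b + 1 + 1 = b + 2" by simp
  show ?thesis
  proof (rule alg_C1)
    show "phi2_int a b (D 0) = (a + 1) * phi2_int (a + 1) b (D 0) + (b + 1) * phi2_int a (b + 1) (D 0)"
      by (rule phi2_int_sum[OF ab c0])
    show "phi2_int (a + 1) b (D 0) = phi2_int a (b + 1) (D 0) + phi2_int (a + 1) (b + 1) (D 1)"
      by (rule phi2_int_ibp[OF ab c0 c1 der])
    show "phi2_int a (b + 1) (D 0) = (a + 1) * phi2_int (a + 1) (b + 1) (D 0) + (b + 2) * phi2_int a (b + 2) (D 0)"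
      using phi2_int_sum[of a "b + 1", OF _ _ c0] ab unfolding bb by simp
    show "phi2_int (a + 1) (b + 1) (D 0) = phi2_int a (b + 2) (D 0) + phi2_int (a + 1) (b + 2) (D 1)"
      using phi2_int_ibp[of a "b + 1", OF _ _ c0 c1 der] ab unfolding bb by simp
  qed
qed

fun J :: "nat \<Rightarrow> complex \<Rightarrow> complex \<Rightarrow> (nat \<Rightarrow> real \<Rightarrow> complex) \<Rightarrow> complex" where
  "J 0 a b D = phi2_int a b (D 0)"
| "J (Suc n) a b D = (a + b + 2) * (a + b + 3) * J n (a + 1) (b + 1) D
     - (a + b + 2) * (b + 2) * J n (a + 1) (b + 2) (\<lambda>k. D (Suc k))
     + (a + 1) * J n (a + 1) (b + 1) (\<lambda>k. D (Suc k))"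

lemma J_region: "dseq D \<Longrightarrow> Re a > -1 \<Longrightarrow> Re b > -1 \<Longrightarrow> J n a b D = phi2_int a b (D 0)"
proof (induction n arbitrary: a b D)
  case 0 then show ?case by simp
next
  case (Suc n)
  have sh: "dseq (\<lambda>k. D (Suc k))" using dseq_shift[OF Suc.prems(1)] .
  have "J (Suc n) a b D = (a + b + 2) * (a + b + 3) * phi2_int (a + 1) (b + 1) (D 0)
     - (a + b + 2) * (b + 2) * phi2_int (a + 1) (b + 2) (D 1) + (a + 1) * phi2_int (a + 1) (b + 1) (D 1)"
    using Suc.IH[OF Suc.prems(1), of "a + 1" "b + 1"] Suc.IH[OF sh, of "a + 1" "b + 2"]
      Suc.IH[OF sh, of "a + 1" "b + 1"] Suc.prems by simp
  also have "\<dots> = phi2_int a b (D 0)" using phi2_int_C1[OF Suc.prems] by simp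
  finally show ?case .
qed



lemma xlnx_cont: "continuous_on {0..1} (\<lambda>s::real. s * ln s)"
proof -
  have "((\<lambda>s. ln (inverse s) / inverse s) \<longlongrightarrow> 0) (at_right (0::real))"
    by (rule filterlim_compose[OF ln_x_over_x_tendsto_0 filterlim_inverse_at_top_right])
  then have "((\<lambda>s. - (ln (inverse s) / inverse s)) \<longlongrightarrow> 0) (at_right (0::real))"
    using tendsto_minus by fastforce
  moreover have "eventually (\<lambda>s. - (ln (inverse s) / inverse s) = s * ln s) (at_right (0::real))"
    using eventually_at_right_less[of "0::real"] by eventually_elim (simp only: ln_inverse, simp add: field_simps)
  ultimately have lim: "((\<lambda>s. s * ln s) \<longlongrightarrow> 0) (at_right (0::real))"
    by (rule Lim_transform_eventually)
  show ?thesis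
    unfolding continuous_on_eq_continuous_within
  proof
    fix x :: real assume x: "x \<in> {0..1}"
    show "continuous (at x within {0..1}) (\<lambda>s. s * ln s)"
    proof (cases "x = 0")
      case True
      then show ?thesis using lim
        by (simp add: continuous_within at_within_Icc_at_right)
    next
      case False
      with x have "x > 0" by auto
      then have "isCont (\<lambda>s. s * ln s) x" by (intro continuous_intros) auto
      then show ?thesis by (rule continuous_at_imp_continuous_at_within)
    qed
  qed
qed

lemma holo_base:
  fixes \<sigma> :: "real \<Rightarrow> real" and g :: "real \<Rightarrow> complex"
  assumes \<sigma>: "continuous_on {0..1} \<sigma>" "\<And>u. u \<in> {0..1} \<Longrightarrow> \<sigma> u \<in> {0..1}"
    and g: "continuous_on {0..1} g"
  shows "(\<lambda>a. integral {0..1} (\<lambda>u. of_real (\<sigma> u) powr a * g u)) holomorphic_on {a. Re a > 1}"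
proof -
  have s0: "\<And>u. u \<in> {0..1} \<Longrightarrow> 0 \<le> \<sigma> u" using \<sigma>(2) by auto
  define fx where "fx x t = of_real (\<sigma> t) powr (x - 1) * of_real (\<sigma> t * ln (\<sigma> t)) * g t" for x t
  have "(\<lambda>a. integral (cbox 0 1) (\<lambda>u. of_real (\<sigma> u) powr a * g u)) holomorphic_on {a. Re a > 1}"
  proof (rule leibniz_rule_holomorphic[where fx = fx])
    fix x :: complex and t :: real
    assume x: "x \<in> {a. Re a > 1}" and t: "t \<in> cbox 0 1"
    show "((\<lambda>x. of_real (\<sigma> t) powr x * g t) has_field_derivative fx x t) (at x within {a. Re a > 1})"
    proof (cases "\<sigma> t = 0")
      case True
      then show ?thesis by (simp add: fx_def)
    next
      case False
      with \<sigma>(2)[of t] t have s: "\<sigma> t > 0" by auto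
      have "((\<lambda>x. of_real (\<sigma> t) powr x * g t) has_field_derivative
          (Ln (of_real (\<sigma> t)) * of_real (\<sigma> t) powr x) * g t) (at x)"
        by (intro DERIV_cmult_right has_field_derivative_powr_right) (use s in auto)
      moreover have "(Ln (of_real (\<sigma> t)) * of_real (\<sigma> t) powr x) * g t = fx x t"
        unfolding fx_def using s cpow_minus1[OF s, of x] by (simp add: Ln_of_real)
      ultimately show ?thesis by (metis has_field_derivative_at_within)
    qed
  next
    fix x :: complex assume x: "x \<in> {a. Re a > 1}"
    show "(\<lambda>u. of_real (\<sigma> u) powr x * g u) integrable_on cbox 0 1"
      unfolding cbox_interval
      by (rule integrable_continuous_interval)
         (intro continuous_intros g continuous_on_compose2[OF continuous_on_of_real \<sigma>(1)], use x s0 \<sigma>(1) in auto)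
  next
    have c1: "continuous_on {0..1} (\<lambda>t. \<sigma> t * ln (\<sigma> t))"
      by (rule continuous_on_compose2[OF xlnx_cont \<sigma>(1)]) (use \<sigma>(2) in auto)
    have cs: "continuous_on ({a. Re a > 1} \<times> {0..1}) (\<lambda>p. \<sigma> (snd p))"
      by (rule continuous_on_compose2[OF \<sigma>(1) continuous_on_snd]) auto
    have cl: "continuous_on ({a. Re a > 1} \<times> {0..1}) (\<lambda>p. \<sigma> (snd p) * ln (\<sigma> (snd p)))"
      by (rule continuous_on_compose2[OF c1 continuous_on_snd]) auto
    have cg: "continuous_on ({a. Re a > 1} \<times> {0..1}) (\<lambda>p. g (snd p))"
      by (rule continuous_on_compose2[OF g continuous_on_snd]) auto
    have cP: "continuous_on ({a. Re a > 1} \<times> {0..1}) (\<lambda>p. of_real (\<sigma> (snd p)) powr (fst p - 1))"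
    proof (intro continuous_on_powr_complex continuous_on_of_real cs continuous_on_diff continuous_on_fst
        continuous_on_id continuous_on_const)
      show "{a. Re a > 1} \<times> {0..1} \<subseteq> {z. 0 \<le> Re (complex_of_real (\<sigma> (snd z))) \<or> Im (complex_of_real (\<sigma> (snd z))) \<noteq> 0}"
        using s0 by auto
    qed auto
    have "continuous_on ({a. Re a > 1} \<times> {0..1})
       (\<lambda>p. of_real (\<sigma> (snd p)) powr (fst p - 1) * of_real (\<sigma> (snd p) * ln (\<sigma> (snd p))) * g (snd p))"
      by (rule continuous_on_mult[OF continuous_on_mult[OF cP continuous_on_of_real[OF cl]] cg])
    then show "continuous_on ({a. Re a > 1} \<times> cbox 0 1) (\<lambda>(x, t). fx x t)"
      unfolding cbox_interval fx_def by (simp add: case_prod_beta')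
  qed (rule convex_halfspace_Re_gt)
  then show ?thesis by (simp add: cbox_interval)
qed

lemma phi2_int_holo_a:
  assumes f: "continuous_on {0..1} f" and b: "Re b > 1"
  shows "(\<lambda>a. phi2_int a b f) holomorphic_on {a. Re a > 1}"
proof -
  define g where "g u = of_real (1 - u) powr b * rGamma (b + 1) * f u" for u
  have cg: "continuous_on {0..1} g"
    unfolding g_def by (intro continuous_intros f) (use b in auto)
  have "(\<lambda>a. rGamma (a + 1) * integral {0..1} (\<lambda>u. of_real (id u) powr a * g u)) holomorphic_on {a. Re a > 1}"
    by (intro holomorphic_intros holo_base cg) auto
  moreover have "rGamma (a + 1) * integral {0..1} (\<lambda>u. of_real (id u) powr a * g u) = phi2_int a b f"
    if a: "a \<in> {a. Re a > 1}" for a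
  proof -
    have ci: "(\<lambda>u. of_real u powr a * g u) integrable_on {0..1}"
      by (rule integrable_continuous_interval) (intro continuous_intros cg, use a in auto)
    have "phi2_int a b f = integral {0..1} (\<lambda>u. rGamma (a + 1) * (of_real u powr a * g u))"
      unfolding phi2_int_wgt integral_open_interval_real[symmetric]
      by (rule integral_cong) (simp add: wgt_def g_def mult_ac)
    also have "\<dots> = rGamma (a + 1) * integral {0..1} (\<lambda>u. of_real u powr a * g u)"
      by (rule integral_cmul_c[OF ci])
    finally show ?thesis by simp
  qed
  ultimately show ?thesis by (rule holomorphic_transform)
qed

lemma phi2_int_holo_b:
  assumes f: "continuous_on {0..1} f" and a: "Re a > 1"
  shows "(\<lambda>b. phi2_int a b f) holomorphic_on {b. Re b > 1}"
proof -
  define g where "g u = of_real u powr a * rGamma (a + 1) * f u" for u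
  have cg: "continuous_on {0..1} g"
    unfolding g_def by (intro continuous_intros f) (use a in auto)
  have "(\<lambda>b. rGamma (b + 1) * integral {0..1} (\<lambda>u. of_real (1 - u) powr b * g u)) holomorphic_on {b. Re b > 1}"
    by (intro holomorphic_intros holo_base cg continuous_intros) auto
  moreover have "rGamma (b + 1) * integral {0..1} (\<lambda>u. of_real (1 - u) powr b * g u) = phi2_int a b f"
    if b: "b \<in> {b. Re b > 1}" for b
  proof -
    have ci: "(\<lambda>u. of_real (1 - u) powr b * g u) integrable_on {0..1}"
      by (rule integrable_continuous_interval) (intro continuous_intros cg, use b in auto)
    have "phi2_int a b f = integral {0..1} (\<lambda>u. rGamma (b + 1) * (of_real (1 - u) powr b * g u))"
      unfolding phi2_int_wgt integral_open_interval_real[symmetric]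
      by (rule integral_cong) (simp add: wgt_def g_def mult_ac)
    also have "\<dots> = rGamma (b + 1) * integral {0..1} (\<lambda>u. of_real (1 - u) powr b * g u)"
      by (rule integral_cmul_c[OF ci])
    finally show ?thesis by simp
  qed
  ultimately show ?thesis by (rule holomorphic_transform)
qed

lemma holo_shift:
  assumes "F holomorphic_on {a. Re a > c}" "Re k \<ge> 0"
  shows "(\<lambda>a. F (a + k)) holomorphic_on {a. Re a > c - Re k}"
proof -
  have "(F \<circ> (\<lambda>a. a + k)) holomorphic_on {a. Re a > c - Re k}"
    by (rule holomorphic_on_compose_gen[OF _ assms(1)]) (auto intro!: holomorphic_intros)
  then show ?thesis by (simp add: o_def)
qed

lemma J_holo_a:
  "dseq D \<Longrightarrow> Re b > 1 - real n \<Longrightarrow> (\<lambda>a. J n a b D) holomorphic_on {a. Re a > 1 - real n}"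
proof (induction n arbitrary: b D)
  case 0
  then show ?case using phi2_int_holo_a[OF dseq_cont[OF 0(1)], of b] by simp
next
  case (Suc n)
  have sh: "dseq (\<lambda>k. D (Suc k))" using dseq_shift[OF Suc.prems(1)] .
  have h1: "(\<lambda>a. J n (a + 1) (b + 1) D) holomorphic_on {a. Re a > 1 - real (Suc n)}"
    using holo_shift[OF Suc.IH[OF Suc.prems(1), of "b + 1"], of 1] Suc.prems by simp
  have h2: "(\<lambda>a. J n (a + 1) (b + 2) (\<lambda>k. D (Suc k))) holomorphic_on {a. Re a > 1 - real (Suc n)}"
    using holo_shift[OF Suc.IH[OF sh, of "b + 2"], of 1] Suc.prems by simp
  have h3: "(\<lambda>a. J n (a + 1) (b + 1) (\<lambda>k. D (Suc k))) holomorphic_on {a. Re a > 1 - real (Suc n)}"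
    using holo_shift[OF Suc.IH[OF sh, of "b + 1"], of 1] Suc.prems by simp
  show ?case unfolding J.simps
    by (intro holomorphic_intros h1 h2 h3)
qed

lemma J_holo_b:
  "dseq D \<Longrightarrow> Re a > 1 - real n \<Longrightarrow> (\<lambda>b. J n a b D) holomorphic_on {b. Re b > 1 - real n}"
proof (induction n arbitrary: a D)
  case 0
  then show ?case using phi2_int_holo_b[OF dseq_cont[OF 0(1)], of a] by simp
next
  case (Suc n)
  have sh: "dseq (\<lambda>k. D (Suc k))" using dseq_shift[OF Suc.prems(1)] .
  have h1: "(\<lambda>b. J n (a + 1) (b + 1) D) holomorphic_on {b. Re b > 1 - real (Suc n)}"
    using holo_shift[OF Suc.IH[OF Suc.prems(1), of "a + 1"], of 1] Suc.prems by simp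
  have h2: "(\<lambda>b. J n (a + 1) (b + 2) (\<lambda>k. D (Suc k))) holomorphic_on {b. Re b > 1 - real (Suc n)}"
    by (rule holomorphic_on_subset[OF holo_shift[OF Suc.IH[OF sh, of "a + 1"], of 2]]) (use Suc.prems in auto)
  have h3: "(\<lambda>b. J n (a + 1) (b + 1) (\<lambda>k. D (Suc k))) holomorphic_on {b. Re b > 1 - real (Suc n)}"
    using holo_shift[OF Suc.IH[OF sh, of "a + 1"], of 1] Suc.prems by simp
  show ?case unfolding J.simps
    by (intro holomorphic_intros h1 h2 h3)
qed



lemma sep_ident:
  fixes FP FQ :: "complex \<Rightarrow> complex \<Rightarrow> complex"
  assumes A: "open A" "connected A" and B: "open B" "connected B"
    and AZ: "open AZ" "AZ \<noteq> {}" "AZ \<subseteq> A" and BZ: "open BZ" "BZ \<noteq> {}" "BZ \<subseteq> B"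
    and h1a: "\<And>b. b \<in> B \<Longrightarrow> (\<lambda>a. FP a b) holomorphic_on A"
    and h2a: "\<And>b. b \<in> B \<Longrightarrow> (\<lambda>a. FQ a b) holomorphic_on A"
    and h1b: "\<And>a. a \<in> A \<Longrightarrow> (\<lambda>b. FP a b) holomorphic_on B"
    and h2b: "\<And>a. a \<in> A \<Longrightarrow> (\<lambda>b. FQ a b) holomorphic_on B"
    and eq: "\<And>a b. a \<in> AZ \<Longrightarrow> b \<in> BZ \<Longrightarrow> FP a b = FQ a b"
    and ab: "a \<in> A" "b \<in> B"
  shows "FP a b = FQ a b"
proof -
  have step1: "FP a' b' = FQ a' b'" if "a' \<in> A" "b' \<in> BZ" for a' b'
    by (rule analytic_continuation_open[where f="\<lambda>a. FP a b'" and g="\<lambda>a. FQ a b'",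
          OF AZ(1) A(1) AZ(2) A(2) AZ(3)]) (use that BZ h1a h2a eq in auto)
  show ?thesis
    by (rule analytic_continuation_open[where f="\<lambda>b. FP a b" and g="\<lambda>b. FQ a b",
          OF BZ(1) B(1) BZ(2) B(2) BZ(3)]) (use ab h1b h2b step1 in auto)
qed

lemma halfplane_ne: "{a::complex. Re a > c} \<noteq> {}"
proof -
  have "of_real (c + 1) \<in> {a::complex. Re a > c}" by simp
  then show ?thesis by blast
qed

lemma ext_ident:
  fixes FP FQ :: "complex \<Rightarrow> complex \<Rightarrow> complex"
  assumes h1a: "\<And>b. (\<lambda>a. FP a b) holomorphic_on UNIV"
    and h2a: "\<And>b. (\<lambda>a. FQ a b) holomorphic_on UNIV"
    and h1b: "\<And>a. (\<lambda>b. FP a b) holomorphic_on UNIV"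
    and h2b: "\<And>a. (\<lambda>b. FQ a b) holomorphic_on UNIV"
    and eq: "\<And>a b. Re a > c \<Longrightarrow> Re b > c \<Longrightarrow> FP a b = FQ a b"
  shows "FP a b = FQ a b"
  by (rule sep_ident[where FP=FP and FQ=FQ and A=UNIV and B=UNIV and AZ="{a. Re a > c}" and BZ="{a. Re a > c}"])
     (use assms halfplane_ne open_halfspace_Re_gt in auto)

lemma J_consistent:
  assumes D: "dseq D" and nm: "n \<ge> 2" "m \<ge> 2"
    and a: "Re a > 1 - real n" "Re a > 1 - real m" and b: "Re b > 1 - real n" "Re b > 1 - real m"
  shows "J n a b D = J m a b D"
proof -
  define c where "c = 1 - real (min n m)"
  have cn: "c \<ge> 1 - real n" "c \<ge> 1 - real m" "c \<le> -1" using nm by (auto simp: c_def)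
  have sub: "{a. Re a > c} \<subseteq> {a. Re a > 1 - real n}" "{a. Re a > c} \<subseteq> {a. Re a > 1 - real m}"
    using cn by auto
  show ?thesis
  proof (rule sep_ident[where FP="\<lambda>a b. J n a b D" and FQ="\<lambda>a b. J m a b D" and A="{a. Re a > c}"
      and B="{a. Re a > c}" and AZ="{a. Re a > -1}" and BZ="{a. Re a > -1}"])
    show "(\<lambda>a. J n a b' D) holomorphic_on {a. Re a > c}" if "b' \<in> {a. Re a > c}" for b'
      by (rule holomorphic_on_subset[OF J_holo_a[OF D] sub(1)]) (use that cn in auto)
    show "(\<lambda>a. J m a b' D) holomorphic_on {a. Re a > c}" if "b' \<in> {a. Re a > c}" for b'
      by (rule holomorphic_on_subset[OF J_holo_a[OF D] sub(2)]) (use that cn in auto)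
    show "(\<lambda>b. J n a' b D) holomorphic_on {a. Re a > c}" if "a' \<in> {a. Re a > c}" for a'
      by (rule holomorphic_on_subset[OF J_holo_b[OF D] sub(1)]) (use that cn in auto)
    show "(\<lambda>b. J m a' b D) holomorphic_on {a. Re a > c}" if "a' \<in> {a. Re a > c}" for a'
      by (rule holomorphic_on_subset[OF J_holo_b[OF D] sub(2)]) (use that cn in auto)
    show "J n a' b' D = J m a' b' D" if "a' \<in> {a. Re a > -1}" "b' \<in> {a. Re a > -1}" for a' b'
      using J_region[OF D, of a' b'] that by simp
  qed (use a b cn halfplane_ne open_halfspace_Re_gt in \<open>auto simp: c_def\<close>)
qed

definition NN :: "complex \<Rightarrow> complex \<Rightarrow> nat" where
  "NN a b = nat \<lceil>max (- Re a) (- Re b)\<rceil> + 2"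

lemma NN_ge: "NN a b \<ge> 2" "Re a > 1 - real (NN a b)" "Re b > 1 - real (NN a b)"
proof -
  have "real (nat \<lceil>max (- Re a) (- Re b)\<rceil>) \<ge> max (- Re a) (- Re b)"
    by linarith
  then show "NN a b \<ge> 2" "Re a > 1 - real (NN a b)" "Re b > 1 - real (NN a b)"
    unfolding NN_def by auto
qed

definition GG :: "(nat \<Rightarrow> real \<Rightarrow> complex) \<Rightarrow> complex \<Rightarrow> complex \<Rightarrow> complex" where
  "GG D a b = J (NN a b) a b D"

lemma GG_eq_J:
  assumes "dseq D" "n \<ge> 2" "Re a > 1 - real n" "Re b > 1 - real n"
  shows "GG D a b = J n a b D"
  unfolding GG_def by (rule J_consistent) (use assms NN_ge[of a b] in auto)

lemma holo_local:
  assumes "\<And>x. \<exists>T. open T \<and> x \<in> T \<and> f holomorphic_on T"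
  shows "f holomorphic_on UNIV"
proof -
  have "f analytic_on UNIV"
    unfolding analytic_on_def by (metis assms holomorphic_on_subset open_contains_ball)
  then show ?thesis by (rule analytic_imp_holomorphic)
qed

lemma GG_holo_a: "dseq D \<Longrightarrow> (\<lambda>a. GG D a b) holomorphic_on UNIV"
proof (rule holo_local)
  fix a0 assume D: "dseq D"
  define M where "M = NN a0 b"
  have M: "M \<ge> 2" "Re a0 > 1 - real M" "Re b > 1 - real M" using NN_ge[of a0 b] by (auto simp: M_def)
  have "(\<lambda>a. GG D a b) holomorphic_on {a. Re a > 1 - real M}"
    by (rule holomorphic_transform[OF J_holo_a[OF D M(3)]]) (use GG_eq_J[OF D M(1) _ M(3)] in auto)
  then show "\<exists>T. open T \<and> a0 \<in> T \<and> (\<lambda>a. GG D a b) holomorphic_on T"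
    using M open_halfspace_Re_gt by blast
qed

lemma GG_holo_b: "dseq D \<Longrightarrow> (\<lambda>b. GG D a b) holomorphic_on UNIV"
proof (rule holo_local)
  fix b0 assume D: "dseq D"
  define M where "M = NN a b0"
  have M: "M \<ge> 2" "Re a > 1 - real M" "Re b0 > 1 - real M" using NN_ge[of a b0] by (auto simp: M_def)
  have "(\<lambda>b. GG D a b) holomorphic_on {b. Re b > 1 - real M}"
    by (rule holomorphic_transform[OF J_holo_b[OF D M(2)]]) (use GG_eq_J[OF D M(1) M(2)] in auto)
  then show "\<exists>T. open T \<and> b0 \<in> T \<and> (\<lambda>b. GG D a b) holomorphic_on T"
    using M open_halfspace_Re_gt by blast
qed

lemma GG_region: "dseq D \<Longrightarrow> Re a > -1 \<Longrightarrow> Re b > -1 \<Longrightarrow> GG D a b = phi2_int a b (D 0)"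
  unfolding GG_def by (rule J_region)

lemma phi2_eq_GG:
  assumes D: "dseq D"
  shows "phi2 a b (D 0) = GG D a b"
  unfolding phi2_def
proof (rule the_equality)
  show "\<exists>G. (\<forall>b'. (\<lambda>a'. G a' b') holomorphic_on UNIV) \<and> (\<forall>a'. G a' holomorphic_on UNIV) \<and>
      (\<forall>a' b'. Re a' > -1 \<and> Re b' > -1 \<longrightarrow> G a' b' = phi2_int a' b' (D 0)) \<and> GG D a b = G a b"
    by (rule exI[of _ "GG D"]) (use GG_holo_a[OF D] GG_holo_b[OF D] GG_region[OF D] in auto)
next
  fix v assume "\<exists>G. (\<forall>b'. (\<lambda>a'. G a' b') holomorphic_on UNIV) \<and> (\<forall>a'. G a' holomorphic_on UNIV) \<and>
      (\<forall>a' b'. Re a' > -1 \<and> Re b' > -1 \<longrightarrow> G a' b' = phi2_int a' b' (D 0)) \<and> v = G a b"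
  then obtain G where G: "\<And>b'. (\<lambda>a'. G a' b') holomorphic_on UNIV" "\<And>a'. G a' holomorphic_on UNIV"
    "\<And>a' b'. Re a' > -1 \<Longrightarrow> Re b' > -1 \<Longrightarrow> G a' b' = phi2_int a' b' (D 0)" "v = G a b"
    by blast
  have "G a b = GG D a b"
    by (rule ext_ident[of G "GG D" "-1"]) (use G GG_holo_a[OF D] GG_holo_b[OF D] GG_region[OF D] in auto)
  then show "v = GG D a b" using G(4) by simp
qed

lemma phi2_J: "dseq D \<Longrightarrow> n \<ge> 2 \<Longrightarrow> Re a > 1 - real n \<Longrightarrow> Re b > 1 - real n \<Longrightarrow>
   phi2 a b (D 0) = J n a b D"
  using phi2_eq_GG GG_eq_J by simp

lemma phi2_region: "dseq D \<Longrightarrow> Re a > -1 \<Longrightarrow> Re b > -1 \<Longrightarrow> phi2 a b (D 0) = phi2_int a b (D 0)"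
  using phi2_eq_GG GG_region by simp

lemma phi2_holo_a: "dseq D \<Longrightarrow> (\<lambda>a. phi2 a b (D 0)) holomorphic_on UNIV"
  using phi2_eq_GG GG_holo_a by simp

lemma phi2_holo_b: "dseq D \<Longrightarrow> (\<lambda>b. phi2 a b (D 0)) holomorphic_on UNIV"
  using phi2_eq_GG GG_holo_b by simp



lemma dseq_add: "dseq D \<Longrightarrow> dseq E \<Longrightarrow> dseq (\<lambda>k u. D k u + E k u)"
  unfolding dseq_def by (auto intro!: has_vector_derivative_add)

lemma dseq_diff: "dseq D \<Longrightarrow> dseq E \<Longrightarrow> dseq (\<lambda>k u. D k u - E k u)"
  unfolding dseq_def by (auto intro!: has_vector_derivative_diff)

lemma dseq_sum: "finite I \<Longrightarrow> (\<And>i. i \<in> I \<Longrightarrow> dseq (Ds i)) \<Longrightarrow> dseq (\<lambda>k u. \<Sum>i\<in>I. c i * Ds i k u)"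
  unfolding dseq_def by (auto intro!: has_vector_derivative_sum has_vector_derivative_mult_right)

lemma dseq_one: "dseq (\<lambda>k u. if k = 0 then 1 else 0)"
  unfolding dseq_def by auto

definition mulu :: "(nat \<Rightarrow> real \<Rightarrow> complex) \<Rightarrow> nat \<Rightarrow> real \<Rightarrow> complex" where
  "mulu D k u = of_real u * D k u + of_nat k * D (k - 1) u"

lemma dseq_mulu: "dseq D \<Longrightarrow> dseq (mulu D)"
  unfolding dseq_def
proof (intro allI)
  fix n x assume D: "\<forall>n x. (D n has_vector_derivative D (Suc n) x) (at x)"
  have d1: "((\<lambda>u. of_real u * D n u) has_vector_derivative (of_real x * D (Suc n) x + 1 * D n x)) (at x)"
    by (intro has_vector_derivative_mult D[rule_format]) (auto intro!: derivative_eq_intros)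
  have d2: "((\<lambda>u. of_nat n * D (n - 1) u) has_vector_derivative (of_nat n * D (Suc (n - 1)) x)) (at x)"
    by (intro has_vector_derivative_mult_right D[rule_format])
  have "((\<lambda>u. of_real u * D n u + of_nat n * D (n - 1) u) has_vector_derivative
        (of_real x * D (Suc n) x + 1 * D n x + of_nat n * D (Suc (n - 1)) x)) (at x)"
    by (rule has_vector_derivative_add[OF d1 d2])
  moreover have e: "of_real x * D (Suc n) x + 1 * D n x + of_nat n * D (Suc (n - 1)) x = mulu D (Suc n) x"
    by (cases n) (simp_all add: mulu_def algebra_simps)
  ultimately have d: "((\<lambda>u. of_real u * D n u + of_nat n * D (n - 1) u) has_vector_derivative mulu D (Suc n) x) (at x)"
    by (simp only:)
  have eqf: "mulu D n = (\<lambda>u. of_real u * D n u + of_nat n * D (n - 1) u)" by (simp add: fun_eq_iff mulu_def)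
  show "(mulu D n has_vector_derivative mulu D (Suc n) x) (at x)"
    unfolding eqf by (rule d)
qed

lemma mulu_0: "mulu D 0 = (\<lambda>u. of_real u * D 0 u)"
  by (simp add: mulu_def fun_eq_iff)

lemma phi2_holo_a': "dseq D \<Longrightarrow> (\<lambda>a. phi2 (a + k) b (D 0)) holomorphic_on UNIV"
proof -
  assume D: "dseq D"
  have "((\<lambda>a. phi2 a b (D 0)) \<circ> (\<lambda>a. a + k)) holomorphic_on UNIV"
    by (rule holomorphic_on_compose_gen) (auto intro: holomorphic_intros phi2_holo_a[OF D])
  then show ?thesis by (simp add: o_def)
qed

lemma phi2_holo_b': "dseq D \<Longrightarrow> (\<lambda>b. phi2 a (b + k) (D 0)) holomorphic_on UNIV"
proof -
  assume D: "dseq D"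
  have "((\<lambda>b. phi2 a b (D 0)) \<circ> (\<lambda>b. b + k)) holomorphic_on UNIV"
    by (rule holomorphic_on_compose_gen) (auto intro: holomorphic_intros phi2_holo_b[OF D])
  then show ?thesis by (simp add: o_def)
qed

lemma phi2_sum:
  assumes I: "finite I" and Ds: "\<And>i. i \<in> I \<Longrightarrow> dseq (Ds i)"
  shows "phi2 a b (\<lambda>u. \<Sum>i\<in>I. c i * Ds i 0 u) = (\<Sum>i\<in>I. c i * phi2 a b (Ds i 0))"
proof -
  define E where "E = (\<lambda>k u. \<Sum>i\<in>I. c i * Ds i k u)"
  have E: "dseq E" unfolding E_def by (rule dseq_sum[OF I Ds])
  have "phi2 a b (E 0) = (\<Sum>i\<in>I. c i * phi2 a b (Ds i 0))"
  proof (rule ext_ident[where FP="\<lambda>a b. phi2 a b (E 0)" and FQ="\<lambda>a b. \<Sum>i\<in>I. c i * phi2 a b (Ds i 0)" and c="-1"])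
    fix a b :: complex assume ab: "Re a > -1" "Re b > -1"
    have int: "(\<lambda>u. wgt a b u * Ds i 0 u) integrable_on {0<..<1}" if "i \<in> I" for i
      by (rule wgt_integrable[OF ab dseq_cont[OF Ds[OF that]]])
    have "phi2 a b (E 0) = integral {0<..<1} (\<lambda>u. \<Sum>i\<in>I. c i * (wgt a b u * Ds i 0 u))"
      unfolding phi2_region[OF E ab] phi2_int_wgt by (simp add: E_def sum_distrib_left mult_ac)
    also have "\<dots> = (\<Sum>i\<in>I. c i * integral {0<..<1} (\<lambda>u. wgt a b u * Ds i 0 u))"
      by (subst integral_sum[OF I]) (auto intro: integrable_on_mult_right int simp: integral_cmul_c int)
    also have "\<dots> = (\<Sum>i\<in>I. c i * phi2 a b (Ds i 0))"
      by (intro sum.cong refl) (simp add: phi2_region[OF Ds ab] phi2_int_wgt)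
    finally show "phi2 a b (E 0) = (\<Sum>i\<in>I. c i * phi2 a b (Ds i 0))" .
  qed (use phi2_holo_a[OF E] phi2_holo_b[OF E] phi2_holo_a[OF Ds] phi2_holo_b[OF Ds] in
       \<open>auto intro!: holomorphic_intros\<close>)
  moreover have "E 0 = (\<lambda>u. \<Sum>i\<in>I. c i * Ds i 0 u)" by (simp add: E_def)
  ultimately show ?thesis by simp
qed

lemma phi2_add:
  assumes "dseq D" "dseq E"
  shows "phi2 a b (\<lambda>u. D 0 u + E 0 u) = phi2 a b (D 0) + phi2 a b (E 0)"
proof -
  define Ds where "Ds = (\<lambda>i::nat. if i = 0 then D else E)"
  have "phi2 a b (\<lambda>u. \<Sum>i\<in>{0,1}. 1 * Ds i 0 u) = (\<Sum>i\<in>{0,1}. 1 * phi2 a b (Ds i 0))"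
    by (rule phi2_sum) (use assms in \<open>auto simp: Ds_def\<close>)
  then show ?thesis by (simp add: Ds_def)
qed

lemma phi2_mulu:
  assumes D: "dseq D"
  shows "phi2 a b (\<lambda>u. of_real u * D 0 u) = (a + 1) * phi2 (a + 1) b (D 0)"
proof -
  have M: "dseq (mulu D)" by (rule dseq_mulu[OF D])
  have "phi2 a b (mulu D 0) = (a + 1) * phi2 (a + 1) b (D 0)"
  proof (rule ext_ident[where FP="\<lambda>a b. phi2 a b (mulu D 0)" and FQ="\<lambda>a b. (a + 1) * phi2 (a + 1) b (D 0)" and c="-1"])
    fix a b :: complex assume ab: "Re a > -1" "Re b > -1"
    have ab': "Re (a + 1) > -1" using ab by simp
    have int: "(\<lambda>u. wgt (a + 1) b u * D 0 u) integrable_on {0<..<1}"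
      by (rule wgt_integrable[OF ab' ab(2) dseq_cont[OF D]])
    have "phi2 a b (mulu D 0) = integral {0<..<1} (\<lambda>u. (a + 1) * (wgt (a + 1) b u * D 0 u))"
      unfolding phi2_region[OF M ab] phi2_int_wgt
    proof (rule integral_cong)
      fix u :: real assume "u \<in> {0<..<1}"
      then show "wgt a b u * mulu D 0 u = (a + 1) * (wgt (a + 1) b u * D 0 u)"
        using wgt_rec_a[of u a b] by (simp add: mult_ac mulu_0)
    qed
    also have "\<dots> = (a + 1) * phi2 (a + 1) b (D 0)"
      by (simp add: integral_cmul_c[OF int] phi2_region[OF D ab' ab(2)] phi2_int_wgt)
    finally show "phi2 a b (mulu D 0) = (a + 1) * phi2 (a + 1) b (D 0)" .
  qed (use phi2_holo_a[OF M] phi2_holo_b[OF M] phi2_holo_a'[OF D] phi2_holo_b[OF D] in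
       \<open>auto intro!: holomorphic_intros\<close>)
  then show ?thesis by (simp add: mulu_0)
qed

lemma real_ident:
  fixes FP FQ :: "complex \<Rightarrow> complex \<Rightarrow> complex"
  assumes h1a: "\<And>b. (\<lambda>a. FP a b) holomorphic_on UNIV"
    and h2a: "\<And>b. (\<lambda>a. FQ a b) holomorphic_on UNIV"
    and h1b: "\<And>a. (\<lambda>b. FP a b) holomorphic_on UNIV"
    and h2b: "\<And>a. (\<lambda>b. FQ a b) holomorphic_on UNIV"
    and eq: "\<And>x y. x > c \<Longrightarrow> y > c \<Longrightarrow> FP (of_real x) (of_real y) = FQ (of_real x) (of_real y)"
  shows "FP a b = FQ a b"
proof -
  define U where "U = complex_of_real ` {c<..}"
  have lp: "complex_of_real (c + 1) islimpt U"
    unfolding islimpt_approachable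
  proof (intro allI impI)
    fix e :: real assume e: "e > 0"
    define x where "x = c + 1 + min 1 e / 2"
    have "x \<in> {c<..}" using e by (auto simp: x_def)
    then have m: "complex_of_real x \<in> U" unfolding U_def by (rule imageI)
    have "x \<noteq> c + 1" using e by (auto simp: x_def)
    then have n: "complex_of_real x \<noteq> of_real (c + 1)" by (metis of_real_eq_iff)
    have "dist (complex_of_real x) (of_real (c + 1)) = \<bar>x - (c + 1)\<bar>"
      by (simp only: dist_norm of_real_diff[symmetric] norm_of_real)
    also have "\<dots> < e" using e by (auto simp: x_def)
    finally have "dist (complex_of_real x) (of_real (c + 1)) < e" .
    note m n this
    then show "\<exists>x'\<in>U. x' \<noteq> complex_of_real (c + 1) \<and> dist x' (complex_of_real (c + 1)) < e" by blast
  qed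
  have step1: "FP a' (of_real y) = FQ a' (of_real y)" if y: "y > c" for a' y
  proof -
    have "(\<lambda>a. FP a (of_real y) - FQ a (of_real y)) a' = 0"
      by (rule analytic_continuation[where S=UNIV and U=U and \<xi>="of_real (c + 1)", OF _ _ _ _ _ lp])
         (use h1a h2a eq y in \<open>auto intro!: holomorphic_intros simp: U_def\<close>)
    then show ?thesis by simp
  qed
  have "(\<lambda>b. FP a b - FQ a b) b = 0"
    by (rule analytic_continuation[where S=UNIV and U=U and \<xi>="of_real (c + 1)", OF _ _ _ _ _ lp])
       (use h1b h2b step1 in \<open>auto intro!: holomorphic_intros simp: U_def\<close>)
  then show ?thesis by simp
qed

lemma phi2_int_one_real:
  fixes x y :: real
  assumes "x > -1" "y > -1"
  shows "phi2_int (of_real x) (of_real y) (\<lambda>u. 1) = rGamma (of_real x + of_real y + 2)"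
proof -
  have "((\<lambda>u. u powr (x + 1 - 1) * (1 - u) powr (y + 1 - 1)) has_integral Beta (x + 1) (y + 1)) {0..1}"
    using assms by (intro has_integral_Beta_real) auto
  then have "((\<lambda>u. u powr x * (1 - u) powr y * (rGamma (x + 1) * rGamma (y + 1))) has_integral
      Beta (x + 1) (y + 1) * (rGamma (x + 1) * rGamma (y + 1))) {0<..<1}"
    by (intro has_integral_mult_left) (simp add: has_integral_Icc_iff_Ioo)
  moreover have "Beta (x + 1) (y + 1) * (rGamma (x + 1) * rGamma (y + 1)) = rGamma (x + y + 2)"
  proof -
    have "Gamma (x + 1) > 0" by (rule Gamma_real_pos) (use assms in simp)
    then have gx: "Gamma (x + 1) \<noteq> 0" by linarith
    have "Gamma (y + 1) > 0" by (rule Gamma_real_pos) (use assms in simp)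
    then have gy: "Gamma (y + 1) \<noteq> 0" by linarith
    have g: "Gamma (x + 1) * rGamma (x + 1) = 1" "Gamma (y + 1) * rGamma (y + 1) = 1"
      using gx gy by (simp_all add: rGamma_inverse_Gamma)
    have "Beta (x + 1) (y + 1) * (rGamma (x + 1) * rGamma (y + 1))
        = (Gamma (x + 1) * rGamma (x + 1)) * (Gamma (y + 1) * rGamma (y + 1)) * rGamma (x + 1 + (y + 1))"
      by (simp add: Beta_altdef mult_ac)
    also have "\<dots> = rGamma (x + y + 2)" using g by (simp add: add_ac)
    finally show ?thesis .
  qed
  ultimately have hi: "((\<lambda>u. u powr x * (1 - u) powr y * (rGamma (x + 1) * rGamma (y + 1))) has_integral
      rGamma (x + y + 2)) {0<..<1}" by simp
  have "phi2_int (of_real x) (of_real y) (\<lambda>u. 1) = integral {0<..<1}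
      (\<lambda>u. of_real (u powr x * (1 - u) powr y * (rGamma (x + 1) * rGamma (y + 1))))"
    unfolding phi2_int_def
  proof (rule integral_cong)
    fix u :: real assume u: "u \<in> {0<..<1}"
    have "complex_of_real u powr complex_of_real x = of_real (u powr x)"
      using u by (intro powr_of_real) auto
    moreover have "complex_of_real (1 - u) powr complex_of_real y = of_real ((1 - u) powr y)"
      using u by (intro powr_of_real) auto
    moreover have "rGamma (complex_of_real x + 1) = of_real (rGamma (x + 1))"
      using rGamma_complex_of_real[of "x + 1"] by simp
    moreover have "rGamma (complex_of_real y + 1) = of_real (rGamma (y + 1))"
      using rGamma_complex_of_real[of "y + 1"] by simp
    ultimately show "complex_of_real u powr complex_of_real x * complex_of_real (1 - u) powr complex_of_real y *
      rGamma (complex_of_real x + 1) * rGamma (complex_of_real y + 1) * 1 =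
      complex_of_real (u powr x * (1 - u) powr y * (rGamma (x + 1) * rGamma (y + 1)))"
      by (simp add: mult_ac)
  qed
  also have "\<dots> = of_real (rGamma (x + y + 2))"
    by (rule integral_unique[OF has_integral_of_real[OF hi]])
  also have "\<dots> = rGamma (of_real x + of_real y + 2)"
    using rGamma_complex_of_real[of "x + y + 2"] by simp
  finally show ?thesis .
qed

lemma phi2_one: "phi2 a b (\<lambda>u. 1) = rGamma (a + b + 2)"
proof -
  define D where "D = (\<lambda>(k::nat) (u::real). if k = 0 then (1::complex) else 0)"
  have D: "dseq D" unfolding D_def by (rule dseq_one)
  have "phi2 a b (D 0) = rGamma (a + b + 2)"
  proof (rule real_ident[where FP="\<lambda>a b. phi2 a b (D 0)" and FQ="\<lambda>a b. rGamma (a + b + 2)" and c="-1"])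
    fix x y :: real assume "x > -1" "y > -1"
    then show "phi2 (of_real x) (of_real y) (D 0) = rGamma (of_real x + of_real y + 2)"
      using phi2_region[OF D, of "of_real x" "of_real y"] phi2_int_one_real[of x y]
      by (simp add: D_def)
  qed (use phi2_holo_a[OF D] phi2_holo_b[OF D] in \<open>auto intro!: holomorphic_intros\<close>)
  then show ?thesis by (simp add: D_def)
qed

primrec Dpow :: "nat \<Rightarrow> nat \<Rightarrow> real \<Rightarrow> complex" where
  "Dpow 0 = (\<lambda>k u. if k = 0 then 1 else 0)"
| "Dpow (Suc i) = mulu (Dpow i)"

lemma dseq_Dpow: "dseq (Dpow i)"
  by (induction i) (simp_all add: dseq_one dseq_mulu)

lemma Dpow_0: "Dpow i 0 = (\<lambda>u. of_real u ^ i)"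
  by (induction i) (simp_all add: mulu_0)

lemma phi2_pow: "phi2 a b (\<lambda>u. of_real u ^ i) = pochhammer (a + 1) i * rGamma (a + b + of_nat i + 2)"
proof (induction i arbitrary: a)
  case 0
  then show ?case using phi2_one by simp
next
  case (Suc i)
  have "phi2 a b (\<lambda>u. of_real u ^ Suc i) = phi2 a b (\<lambda>u. of_real u * Dpow i 0 u)"
    by (simp add: Dpow_0)
  also have "\<dots> = (a + 1) * phi2 (a + 1) b (Dpow i 0)"
    by (rule phi2_mulu[OF dseq_Dpow])
  also have "\<dots> = (a + 1) * (pochhammer (a + 1 + 1) i * rGamma (a + 1 + b + of_nat i + 2))"
    using Suc.IH[of "a + 1"] by (simp add: Dpow_0)
  also have "\<dots> = pochhammer (a + 1) (Suc i) * rGamma (a + b + of_nat (Suc i) + 2)"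
    by (simp add: pochhammer_rec add_ac)
  finally show ?case .
qed



lemma phi2_int_cbox: "phi2_int a b f = integral (cbox 0 1) (\<lambda>u. wgt a b u * f u)"
  by (simp add: phi2_int_wgt cbox_interval integral_open_interval_real)

lemma J_deriv:
  fixes Z Z' :: "real \<Rightarrow> nat \<Rightarrow> real \<Rightarrow> complex"
  shows "(\<And>y j u. ((\<lambda>y. Z y j u) has_vector_derivative Z' y j u) (at y)) \<Longrightarrow>
    (\<And>y j. continuous_on {0..1} (Z y j)) \<Longrightarrow>
    (\<And>j. continuous_on (UNIV \<times> {0..1}) (\<lambda>(y, u). Z' y j u)) \<Longrightarrow>
    Re a > 1 - real n \<Longrightarrow> Re b > 1 - real n \<Longrightarrow>
    ((\<lambda>y. J n a b (Z y)) has_vector_derivative J n a b (Z' y)) (at y)"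
proof (induction n arbitrary: a b Z Z')
  case 0
  have ab: "Re a > 0" "Re b > 0" using 0 by auto
  have cw: "continuous_on {0..1} (wgt a b)" by (rule cont_wgt_closed[OF ab])
  have "((\<lambda>y. integral (cbox 0 1) (\<lambda>u. wgt a b u * Z y 0 u)) has_vector_derivative
        integral (cbox 0 1) (\<lambda>u. wgt a b u * Z' y 0 u)) (at y within UNIV)"
  proof (rule leibniz_rule_vector_derivative)
    fix x :: real and u :: real
    show "((\<lambda>x. wgt a b u * Z x 0 u) has_vector_derivative wgt a b u * Z' x 0 u) (at x within UNIV)"
      by (rule has_vector_derivative_mult_right) (use 0(1) in simp)
  next
    fix x :: real
    show "(\<lambda>u. wgt a b u * Z x 0 u) integrable_on cbox 0 1"
      unfolding cbox_interval by (rule integrable_continuous_interval) (intro continuous_intros cw 0(2))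
  next
    have c1: "continuous_on (UNIV \<times> {0..1}) (\<lambda>p::real\<times>real. wgt a b (snd p))"
      by (rule continuous_on_compose2[OF cw continuous_on_snd]) auto
    have c2: "continuous_on (UNIV \<times> {0..1}) (\<lambda>p::real\<times>real. Z' (fst p) 0 (snd p))"
      using 0(3)[of 0] by (simp add: case_prod_beta')
    show "continuous_on (UNIV \<times> cbox 0 1) (\<lambda>(x, t). wgt a b t * Z' x 0 t)"
      using continuous_on_mult[OF c1 c2] by (simp add: cbox_interval case_prod_beta')
  qed auto
  then show ?case by (simp add: phi2_int_cbox)
next
  case (Suc n)
  have ih: "((\<lambda>y. J n a' b' (Z y)) has_vector_derivative J n a' b' (Z' y)) (at y)"
    if "Re a' > 1 - real n" "Re b' > 1 - real n" for a' b'
    by (rule Suc.IH) (use Suc.prems that in auto)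
  have ih2: "((\<lambda>y. J n a' b' (\<lambda>k. Z y (Suc k))) has_vector_derivative J n a' b' (\<lambda>k. Z' y (Suc k))) (at y)"
    if "Re a' > 1 - real n" "Re b' > 1 - real n" for a' b'
    using Suc.IH[of "\<lambda>y k. Z y (Suc k)" "\<lambda>y k. Z' y (Suc k)" a' b'] Suc.prems that by auto
  show ?case unfolding J.simps
    by (intro has_vector_derivative_add has_vector_derivative_diff has_vector_derivative_mult_right ih ih2)
       (use Suc.prems in auto)
qed

fun BJ :: "nat \<Rightarrow> complex \<Rightarrow> complex \<Rightarrow> real" where
  "BJ 0 a b = norm (rGamma (a + 1)) * norm (rGamma (b + 1))"
| "BJ (Suc n) a b = norm ((a + b + 2) * (a + b + 3)) * BJ n (a + 1) (b + 1)
     + norm ((a + b + 2) * (b + 2)) * BJ n (a + 1) (b + 2) + norm (a + 1) * BJ n (a + 1) (b + 1)"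

lemma BJ_nonneg: "BJ n a b \<ge> 0"
  by (induction n arbitrary: a b) auto

lemma J_bound:
  "Re a > 1 - real n \<Longrightarrow> Re b > 1 - real n \<Longrightarrow> (\<And>j u. j \<le> n \<Longrightarrow> u \<in> {0..1} \<Longrightarrow> norm (D j u) \<le> M)
   \<Longrightarrow> (\<And>j. continuous_on {0..1} (D j)) \<Longrightarrow> norm (J n a b D) \<le> BJ n a b * M"
proof (induction n arbitrary: a b D)
  case 0
  have ab: "Re a > 0" "Re b > 0" using 0 by auto
  have cw: "continuous_on {0..1} (wgt a b)" by (rule cont_wgt_closed[OF ab])
  have "norm (integral {0..1} (\<lambda>u. wgt a b u * D 0 u)) \<le> (BJ 0 a b * M) * (1 - 0)"
  proof (rule integral_bound)
    show "continuous_on {0..1} (\<lambda>u. wgt a b u * D 0 u)" by (intro continuous_intros cw 0(4))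
    fix u :: real assume u: "u \<in> {0..1}"
    have p: "u powr Re a \<le> 1" "(1 - u) powr Re b \<le> 1" using u ab by (auto intro!: powr_le1)
    have "norm (wgt a b u * D 0 u) = (u powr Re a * (1 - u) powr Re b) * BJ 0 a b * norm (D 0 u)"
      using u by (simp add: norm_mult norm_wgt mult_ac)
    also have "\<dots> \<le> 1 * BJ 0 a b * M"
      by (intro mult_mono 0(3) BJ_nonneg mult_le_one p) (use u in auto)
    finally show "norm (wgt a b u * D 0 u) \<le> BJ 0 a b * M" by simp
  qed simp
  then show ?case by (simp add: phi2_int_wgt integral_open_interval_real)
next
  case (Suc n)
  have b1: "norm (J n (a + 1) (b + 1) D) \<le> BJ n (a + 1) (b + 1) * M"
    by (rule Suc.IH) (use Suc.prems in auto)
  have b2: "norm (J n (a + 1) (b + 2) (\<lambda>k. D (Suc k))) \<le> BJ n (a + 1) (b + 2) * M"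
    by (rule Suc.IH) (use Suc.prems in auto)
  have b3: "norm (J n (a + 1) (b + 1) (\<lambda>k. D (Suc k))) \<le> BJ n (a + 1) (b + 1) * M"
    by (rule Suc.IH) (use Suc.prems in auto)
  define c1 where "c1 = (a + b + 2) * (a + b + 3)"
  define c2 where "c2 = (a + b + 2) * (b + 2)"
  define c3 where "c3 = a + 1"
  have "norm (J (Suc n) a b D) \<le> norm c1 * norm (J n (a + 1) (b + 1) D)
      + norm c2 * norm (J n (a + 1) (b + 2) (\<lambda>k. D (Suc k)))
      + norm c3 * norm (J n (a + 1) (b + 1) (\<lambda>k. D (Suc k)))"
  proof -
    define X where "X = J n (a + 1) (b + 1) D"
    define Y where "Y = J n (a + 1) (b + 2) (\<lambda>k. D (Suc k))"
    define Z where "Z = J n (a + 1) (b + 1) (\<lambda>k. D (Suc k))"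
    have "J (Suc n) a b D = c1 * X - c2 * Y + c3 * Z"
      by (simp add: X_def Y_def Z_def c1_def c2_def c3_def)
    also have "norm \<dots> \<le> norm (c1 * X - c2 * Y) + norm (c3 * Z)" by (rule norm_triangle_ineq)
    also have "\<dots> \<le> (norm (c1 * X) + norm (c2 * Y)) + norm (c3 * Z)"
      by (rule add_right_mono) (rule norm_triangle_ineq4)
    finally show ?thesis by (simp add: X_def Y_def Z_def norm_mult)
  qed
  also have "\<dots> \<le> norm c1 * (BJ n (a + 1) (b + 1) * M) + norm c2 * (BJ n (a + 1) (b + 2) * M)
      + norm c3 * (BJ n (a + 1) (b + 1) * M)"
    by (intro add_mono mult_left_mono b1 b2 b3 norm_ge_zero)
  also have "\<dots> = BJ (Suc n) a b * M"
    by (simp add: c1_def c2_def c3_def algebra_simps)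
  finally show ?case .
qed

lemma phi2_bound:
  assumes "dseq D" "n \<ge> 2" "Re a > 1 - real n" "Re b > 1 - real n"
    "\<And>j u. j \<le> n \<Longrightarrow> u \<in> {0..1} \<Longrightarrow> norm (D j u) \<le> M"
  shows "norm (phi2 a b (D 0)) \<le> BJ n a b * M"
  using phi2_J[OF assms(1-4)] J_bound[OF assms(3,4,5) dseq_cont[OF assms(1)]] by simp

definition Zs :: "(nat \<Rightarrow> real \<Rightarrow> complex) \<Rightarrow> real \<Rightarrow> nat \<Rightarrow> real \<Rightarrow> complex" where
  "Zs Dg y j u = of_real y ^ j * Dg j (y * u)"

lemma Zs_0: "Zs Dg y 0 = (\<lambda>u. Dg 0 (y * u))"
  by (simp add: Zs_def fun_eq_iff)

lemma comp_deriv: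
  assumes "dseq Dg"
  shows "((\<lambda>u. Dg j (y * u)) has_vector_derivative (of_real y * Dg (Suc j) (y * u))) (at u)"
proof -
  have "(((Dg j) \<circ> (\<lambda>u. y * u)) has_vector_derivative (y *\<^sub>R Dg (Suc j) (y * u))) (at u)"
  proof (rule vector_diff_chain_at)
    show "((\<lambda>u. y * u) has_vector_derivative y) (at u)"
      using has_vector_derivative_mult_right[OF has_vector_derivative_id, of y "at u"] by simp
  qed (rule dseqD[OF assms])
  then show ?thesis by (simp add: o_def scaleR_conv_of_real)
qed

lemma dseq_Zs: assumes D: "dseq Dg" shows "dseq (Zs Dg y)"
  unfolding dseq_def
proof (intro allI)
  fix n x
  have "((\<lambda>u. of_real y ^ n * Dg n (y * u)) has_vector_derivative (of_real y ^ n * (of_real y * Dg (Suc n) (y * x)))) (at x)"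
    by (intro has_vector_derivative_mult_right comp_deriv D)
  then show "(Zs Dg y n has_vector_derivative Zs Dg y (Suc n) x) (at x)"
    unfolding Zs_def[abs_def] by (simp add: mult_ac)
qed

definition Zd :: "(nat \<Rightarrow> real \<Rightarrow> complex) \<Rightarrow> real \<Rightarrow> nat \<Rightarrow> real \<Rightarrow> complex" where
  "Zd Dg y j u = of_nat j * of_real y ^ (j - 1) * Dg j (y * u) + of_real y ^ j * (of_real u * Dg (Suc j) (y * u))"

lemma Zd_0: "Zd Dg y 0 = (\<lambda>u. of_real u * Zs (\<lambda>k. Dg (Suc k)) y 0 u)"
  by (simp add: Zd_def Zs_def fun_eq_iff)

lemma Zs_deriv_y:
  assumes "dseq Dg"
  shows "((\<lambda>y. Zs Dg y j u) has_vector_derivative Zd Dg y j u) (at y)"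
proof -
  have d1: "((\<lambda>y. Dg j (y * u)) has_vector_derivative (of_real u * Dg (Suc j) (y * u))) (at y)"
    using comp_deriv[OF assms, of j u y] by (simp add: mult.commute)
  have d0: "((\<lambda>y. complex_of_real y ^ j) has_vector_derivative (of_nat j * of_real y ^ (j - Suc 0))) (at y)"
    by (rule has_vector_derivative_real_field) (auto intro!: derivative_eq_intros)
  have "((\<lambda>y. of_real y ^ j * Dg j (y * u)) has_vector_derivative
      (of_real y ^ j * (of_real u * Dg (Suc j) (y * u)) + of_nat j * of_real y ^ (j - Suc 0) * Dg j (y * u))) (at y)"
    by (rule has_vector_derivative_mult[OF d0 d1])
  then show ?thesis unfolding Zs_def Zd_def by (simp add: algebra_simps)
qed

lemma cont_comp2:
  assumes "continuous_on UNIV g"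
  shows "continuous_on S (\<lambda>(y, u). g (y * u :: real))"
proof -
  have "continuous_on S (\<lambda>p::real\<times>real. g (fst p * snd p))"
    by (rule continuous_on_compose2[OF assms]) (auto intro!: continuous_intros)
  then show ?thesis by (simp add: case_prod_beta')
qed

lemma Zd_cont:
  assumes "dseq Dg"
  shows "continuous_on (UNIV \<times> {0..1}) (\<lambda>(y, u). Zd Dg y j u)"
proof -
  have g1: "continuous_on (UNIV \<times> {0..1}) (\<lambda>p::real\<times>real. Dg j (fst p * snd p))"
    using cont_comp2[OF dseq_cont[OF assms], of "UNIV \<times> {0..1}" j] by (simp add: case_prod_beta')
  have g2: "continuous_on (UNIV \<times> {0..1}) (\<lambda>p::real\<times>real. Dg (Suc j) (fst p * snd p))"
    using cont_comp2[OF dseq_cont[OF assms], of "UNIV \<times> {0..1}" "Suc j"] by (simp add: case_prod_beta')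
  have "continuous_on (UNIV \<times> {0..1}) (\<lambda>p::real\<times>real. of_nat j * of_real (fst p) ^ (j - 1) * Dg j (fst p * snd p)
      + of_real (fst p) ^ j * (of_real (snd p) * Dg (Suc j) (fst p * snd p)))"
    by (intro continuous_intros g1 g2)
  then show ?thesis by (simp add: Zd_def case_prod_beta')
qed

lemma phi2_deriv:
  assumes D: "dseq Dg"
  shows "((\<lambda>y. phi2 a b (\<lambda>u. Dg 0 (y * u))) has_vector_derivative
     ((a + 1) * phi2 (a + 1) b (\<lambda>u. Dg 1 (y * u)))) (at y)"
proof -
  define n where "n = NN a b"
  have n: "n \<ge> 2" "Re a > 1 - real n" "Re b > 1 - real n" using NN_ge[of a b] by (auto simp: n_def)
  have e1: "(\<lambda>y. phi2 a b (\<lambda>u. Dg 0 (y * u))) = (\<lambda>y. J n a b (Zs Dg y))"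
    using phi2_J[OF dseq_Zs[OF D] n] by (simp add: Zs_0)
  have dZd: "dseq (Zd Dg y)"
  proof -
    have "Zd Dg y = mulu (Zs (\<lambda>k. Dg (Suc k)) y)"
    proof (intro ext)
      fix j u
      show "Zd Dg y j u = mulu (Zs (\<lambda>k. Dg (Suc k)) y) j u"
        by (cases j) (simp_all add: Zd_def mulu_def Zs_def algebra_simps)
    qed
    then show ?thesis using dseq_mulu[OF dseq_Zs[OF dseq_shift[OF D]]] by simp
  qed
  have "((\<lambda>y. J n a b (Zs Dg y)) has_vector_derivative J n a b (Zd Dg y)) (at y)"
    by (rule J_deriv[OF Zs_deriv_y[OF D] _ Zd_cont[OF D] n(2,3)])
       (rule dseq_cont[OF dseq_Zs[OF D]])
  moreover have "J n a b (Zd Dg y) = (a + 1) * phi2 (a + 1) b (\<lambda>u. Dg 1 (y * u))"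
  proof -
    have "J n a b (Zd Dg y) = phi2 a b (Zd Dg y 0)"
      using phi2_J[OF dZd n] by simp
    also have "\<dots> = phi2 a b (\<lambda>u. of_real u * Zs (\<lambda>k. Dg (Suc k)) y 0 u)"
      by (simp add: Zd_0)
    also have "\<dots> = (a + 1) * phi2 (a + 1) b (Zs (\<lambda>k. Dg (Suc k)) y 0)"
      by (rule phi2_mulu[OF dseq_Zs[OF dseq_shift[OF D]]])
    finally show ?thesis by (simp add: Zs_0)
  qed
  ultimately show ?thesis unfolding e1 by simp
qed

definition FF :: "complex \<Rightarrow> complex \<Rightarrow> (nat \<Rightarrow> real \<Rightarrow> complex) \<Rightarrow> nat \<Rightarrow> real \<Rightarrow> complex" where
  "FF a b Dg k y = pochhammer (a + 1) k * phi2 (a + of_nat k) b (\<lambda>u. Dg k (y * u))"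

lemma FF_0: "FF a b Dg 0 = (\<lambda>y. phi2 a b (\<lambda>u. Dg 0 (y * u)))"
  by (simp add: FF_def fun_eq_iff)

lemma dseq_FF: assumes D: "dseq Dg" shows "dseq (FF a b Dg)"
  unfolding dseq_def
proof (intro allI)
  fix k y
  have Dk: "dseq (\<lambda>j. Dg (k + j))" using D unfolding dseq_def by simp
  have d: "((\<lambda>y. phi2 (a + of_nat k) b (\<lambda>u. Dg k (y * u))) has_vector_derivative
       ((a + of_nat k + 1) * phi2 (a + of_nat k + 1) b (\<lambda>u. Dg (Suc k) (y * u)))) (at y)"
    using phi2_deriv[OF Dk, of "a + of_nat k" b y] by simp
  have "((\<lambda>y. pochhammer (a + 1) k * phi2 (a + of_nat k) b (\<lambda>u. Dg k (y * u))) has_vector_derivative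
       pochhammer (a + 1) k * ((a + of_nat k + 1) * phi2 (a + of_nat k + 1) b (\<lambda>u. Dg (Suc k) (y * u)))) (at y)"
    by (rule has_vector_derivative_mult_right[OF d])
  moreover have "pochhammer (a + 1) k * ((a + of_nat k + 1) * phi2 (a + of_nat k + 1) b (\<lambda>u. Dg (Suc k) (y * u)))
      = FF a b Dg (Suc k) y"
    by (simp add: FF_def pochhammer_Suc algebra_simps)
  ultimately show "(FF a b Dg k has_vector_derivative FF a b Dg (Suc k) y) (at y)"
    unfolding FF_def[abs_def] by simp
qed

lemma FF_bound:
  assumes D: "dseq Dg" and m: "m \<ge> 2" "Re (a + of_nat k) > 1 - real m" "Re b > 1 - real m"
    and y: "y \<in> {0..1}" and bd: "\<And>i x. i \<le> k + m \<Longrightarrow> x \<in> {0..1} \<Longrightarrow> norm (Dg i x) \<le> e"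
  shows "norm (FF a b Dg k y) \<le> norm (pochhammer (a + 1) k) * BJ m (a + of_nat k) b * e"
proof -
  have Dk: "dseq (\<lambda>j. Dg (k + j))" using D unfolding dseq_def by simp
  have "norm (phi2 (a + of_nat k) b (Zs (\<lambda>j. Dg (k + j)) y 0)) \<le> BJ m (a + of_nat k) b * e"
  proof (rule phi2_bound[OF dseq_Zs[OF Dk] m])
    fix j and u :: real assume j: "j \<le> m" and u: "u \<in> {0..1}"
    have "norm (Zs (\<lambda>j. Dg (k + j)) y j u) = \<bar>y\<bar> ^ j * norm (Dg (k + j) (y * u))"
      by (simp add: Zs_def norm_mult norm_power)
    also have "\<dots> \<le> 1 * e"
    proof (rule mult_mono)
      show "\<bar>y\<bar> ^ j \<le> 1" using y by (auto intro!: power_le_one)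
      show "norm (Dg (k + j) (y * u)) \<le> e" by (rule bd) (use j y u in \<open>auto intro: mult_le_one\<close>)
    qed auto
    finally show "norm (Zs (\<lambda>j. Dg (k + j)) y j u) \<le> e" by simp
  qed
  then have "norm (pochhammer (a + 1) k) * norm (phi2 (a + of_nat k) b (Zs (\<lambda>j. Dg (k + j)) y 0))
      \<le> norm (pochhammer (a + 1) k) * (BJ m (a + of_nat k) b * e)"
    by (rule mult_left_mono) simp
  then show ?thesis by (simp add: FF_def Zs_0 norm_mult mult_ac)
qed



definition pv :: "nat \<Rightarrow> (nat \<Rightarrow> complex) \<Rightarrow> real \<Rightarrow> complex" where
  "pv N c x = (\<Sum>j\<le>N. c j * of_real x ^ j)"

definition pd :: "(nat \<Rightarrow> complex) \<Rightarrow> nat \<Rightarrow> complex" where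
  "pd c j = of_nat (Suc j) * c (Suc j)"

lemma pd_supp: "(\<forall>j>N. c j = 0) \<Longrightarrow> (\<forall>j>N. pd c j = 0)"
  by (simp add: pd_def)

lemma pdpow_supp: "(\<forall>j>N. c j = 0) \<Longrightarrow> (\<forall>j>N. (pd ^^ i) c j = 0)"
  by (induction i) (simp_all add: pd_supp)

lemma pdpow: "(pd ^^ i) c j = pochhammer (of_nat j + 1) i * c (j + i)"
proof (induction i arbitrary: j)
  case 0 then show ?case by simp
next
  case (Suc i)
  have "(pd ^^ Suc i) c j = of_nat (Suc j) * ((pd ^^ i) c (Suc j))" by (simp add: pd_def)
  also have "\<dots> = (of_nat j + 1) * pochhammer (of_nat j + 1 + 1) i * c (j + Suc i)"
    using Suc.IH[of "Suc j"] by (simp add: add_ac)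
  also have "\<dots> = pochhammer (of_nat j + 1) (Suc i) * c (j + Suc i)"
    by (simp add: pochhammer_rec)
  finally show ?case .
qed

lemma pv_deriv:
  assumes supp: "\<forall>j>N. c j = 0"
  shows "(pv N c has_vector_derivative pv N (pd c) x) (at x)"
proof -
  define f where "f j = c j * (of_nat j * of_real x ^ (j - Suc 0))" for j
  have "((\<lambda>x. \<Sum>j\<le>N. c j * of_real x ^ j) has_vector_derivative (\<Sum>j\<le>N. f j)) (at x)"
    unfolding f_def
    by (intro has_vector_derivative_sum has_vector_derivative_mult_right has_vector_derivative_real_field)
       (auto intro!: derivative_eq_intros)
  moreover have "(\<Sum>j\<le>N. f j) = pv N (pd c) x"
  proof -
    have f0: "f 0 = 0" by (simp add: f_def)
    have fS: "f (Suc N) = 0" using supp by (simp add: f_def)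
    have "(\<Sum>j\<le>N. f j) = (\<Sum>j\<le>Suc N. f j)" by (simp add: fS)
    also have "\<dots> = f 0 + (\<Sum>j\<le>N. f (Suc j))" by (rule sum.atMost_Suc_shift)
    also have "(\<Sum>j\<le>N. f (Suc j)) = pv N (pd c) x"
      unfolding pv_def pd_def f_def by (intro sum.cong refl) (simp add: mult_ac)
    finally show ?thesis by (simp add: f0)
  qed
  ultimately show ?thesis unfolding pv_def[abs_def] by simp
qed

lemma dseq_pv: "(\<forall>j>N. c j = 0) \<Longrightarrow> dseq (\<lambda>i. pv N ((pd ^^ i) c))"
  unfolding dseq_def using pv_deriv[OF pdpow_supp] by simp

lemma weier_coeffs:
  fixes f :: "real \<Rightarrow> complex"
  assumes f: "continuous_on {0..1} f" and e: "e > 0"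
  obtains N E where "\<And>x. x \<in> {0..1} \<Longrightarrow> norm (f x - (\<Sum>i\<le>N. E i * of_real x ^ i)) < e"
proof -
  have cr: "continuous_on {0..1} (\<lambda>x. Re (f x))" and ci: "continuous_on {0..1} (\<lambda>x. Im (f x))"
    by (intro continuous_intros f)+
  obtain gr where gr: "real_polynomial_function gr" "\<And>x. x \<in> {0..1} \<Longrightarrow> \<bar>Re (f x) - gr x\<bar> < e / 2"
    using Stone_Weierstrass_real_polynomial_function[OF compact_Icc cr, of "e / 2"] e by auto
  obtain gi where gi: "real_polynomial_function gi" "\<And>x. x \<in> {0..1} \<Longrightarrow> \<bar>Im (f x) - gi x\<bar> < e / 2"
    using Stone_Weierstrass_real_polynomial_function[OF compact_Icc ci, of "e / 2"] e by auto
  obtain ar nr where ar: "gr = (\<lambda>x. \<Sum>i\<le>nr. ar i * x ^ i)" using gr(1) real_polynomial_function_iff_sum by blast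
  obtain ai ni where ai: "gi = (\<lambda>x. \<Sum>i\<le>ni. ai i * x ^ i)" using gi(1) real_polynomial_function_iff_sum by blast
  define N where "N = nr + ni"
  define E where "E i = complex_of_real (if i \<le> nr then ar i else 0) + \<i> * of_real (if i \<le> ni then ai i else 0)" for i
  have sr: "(\<Sum>i\<le>N. (if i \<le> nr then ar i else 0) * x ^ i) = gr x" for x
  proof -
    have "(\<Sum>i\<le>N. (if i \<le> nr then ar i else 0) * x ^ i) = (\<Sum>i\<le>N. if i \<in> {..nr} then ar i * x ^ i else 0)"
      by (intro sum.cong) auto
    also have "\<dots> = (\<Sum>i\<in>{..N} \<inter> {..nr}. ar i * x ^ i)" by (rule sum.inter_restrict[symmetric]) simp
    also have "{..N} \<inter> {..nr} = {..nr}" by (auto simp: N_def)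
    finally show ?thesis by (simp add: ar)
  qed
  have si: "(\<Sum>i\<le>N. (if i \<le> ni then ai i else 0) * x ^ i) = gi x" for x
  proof -
    have "(\<Sum>i\<le>N. (if i \<le> ni then ai i else 0) * x ^ i) = (\<Sum>i\<le>N. if i \<in> {..ni} then ai i * x ^ i else 0)"
      by (intro sum.cong) auto
    also have "\<dots> = (\<Sum>i\<in>{..N} \<inter> {..ni}. ai i * x ^ i)" by (rule sum.inter_restrict[symmetric]) simp
    also have "{..N} \<inter> {..ni} = {..ni}" by (auto simp: N_def)
    finally show ?thesis by (simp add: ai)
  qed
  have q: "(\<Sum>i\<le>N. E i * of_real x ^ i) = complex_of_real (gr x) + \<i> * of_real (gi x)" for x
  proof -
    have "(\<Sum>i\<le>N. E i * of_real x ^ i) = of_real (\<Sum>i\<le>N. (if i \<le> nr then ar i else 0) * x ^ i)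
        + \<i> * of_real (\<Sum>i\<le>N. (if i \<le> ni then ai i else 0) * x ^ i)"
    proof -
      have "(\<Sum>i\<le>N. E i * of_real x ^ i) = (\<Sum>i\<le>N. of_real ((if i \<le> nr then ar i else 0) * x ^ i)
          + \<i> * of_real ((if i \<le> ni then ai i else 0) * x ^ i))"
        by (intro sum.cong refl) (simp add: E_def algebra_simps)
      also have "\<dots> = (\<Sum>i\<le>N. of_real ((if i \<le> nr then ar i else 0) * x ^ i))
          + \<i> * (\<Sum>i\<le>N. of_real ((if i \<le> ni then ai i else 0) * x ^ i))"
        by (simp only: sum.distrib sum_distrib_left)
      finally show ?thesis by (simp only: of_real_sum)
    qed
    then show ?thesis by (simp only: sr si)
  qed
  show ?thesis
  proof (rule that)
    fix x :: real assume x: "x \<in> {0..1}"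
    have "norm (f x - (\<Sum>i\<le>N. E i * of_real x ^ i)) \<le> \<bar>Re (f x) - gr x\<bar> + \<bar>Im (f x) - gi x\<bar>"
      using cmod_le[of "f x - (complex_of_real (gr x) + \<i> * of_real (gi x))"] by (simp add: q)
    also have "\<dots> < e / 2 + e / 2" using gr(2)[OF x] gi(2)[OF x] by linarith
    finally show "norm (f x - (\<Sum>i\<le>N. E i * of_real x ^ i)) < e" by simp
  qed
qed

lemma mvt_step:
  assumes G: "dseq G" and b: "\<And>x. x \<in> {0..1} \<Longrightarrow> norm (G (Suc i) x) \<le> e" and z: "G i 0 = 0"
    and x: "x \<in> {0..1}"
  shows "norm (G i x) \<le> e"
proof (cases "x = 0")
  case True
  then show ?thesis using z b[of 0] by (auto intro: order.trans[OF norm_ge_zero])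
next
  case False
  with x have x0: "0 < x" by auto
  have "\<exists>\<xi>\<in>{0<..<x}. norm (G i x - G i 0) \<le> norm ((\<lambda>\<xi> h. h *\<^sub>R G (Suc i) \<xi>) \<xi> (x - 0))"
    by (rule mvt_general[where f'="\<lambda>\<xi> h. h *\<^sub>R G (Suc i) \<xi>", OF x0 dseq_cont[OF G]])
       (use dseqD[OF G] in \<open>auto simp: has_vector_derivative_def\<close>)
  then obtain \<xi> where \<xi>: "\<xi> \<in> {0<..<x}" "norm (G i x - G i 0) \<le> norm ((x - 0) *\<^sub>R G (Suc i) \<xi>)"
    by auto
  have "norm ((x - 0) *\<^sub>R G (Suc i) \<xi>) = x * norm (G (Suc i) \<xi>)" using x0 by simp
  also have "\<dots> \<le> 1 * e" by (intro mult_mono b) (use x \<xi> in auto)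
  finally show ?thesis using \<xi>(2) z by simp
qed

lemma poly_approx:
  assumes D: "dseq D" and e: "e > 0"
  obtains N c where "\<forall>j>N. c j = 0" "\<And>i x. i \<le> K \<Longrightarrow> x \<in> {0..1} \<Longrightarrow> norm (D i x - pv N ((pd ^^ i) c) x) \<le> e"
proof -
  obtain N0 E where q: "\<And>x. x \<in> {0..1} \<Longrightarrow> norm (D K x - (\<Sum>i\<le>N0. E i * of_real x ^ i)) < e"
    using weier_coeffs[OF dseq_cont[OF D] e] by blast
  define N where "N = N0 + K"
  define c where "c j = (if j < K then D j 0 / fact j
      else if j - K \<le> N0 then E (j - K) / pochhammer (of_nat (j - K) + 1) K else 0)" for j
  have supp: "\<forall>j>N. c j = 0" by (auto simp: c_def N_def)
  define G where "G i x = D i x - pv N ((pd ^^ i) c) x" for i x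
  have dG: "dseq G" unfolding G_def[abs_def] by (rule dseq_diff[OF D dseq_pv[OF supp]])
  have pK: "pv N ((pd ^^ K) c) x = (\<Sum>i\<le>N0. E i * of_real x ^ i)" for x
  proof -
    have cK: "(pd ^^ K) c j = (if j \<le> N0 then E j else 0)" for j
    proof -
      have e1: "pochhammer (of_nat j + 1 :: complex) K = of_nat (pochhammer (j + 1) K)"
        using pochhammer_of_nat[of "j + 1" K, where 'a=complex] by (simp add: add.commute)
      have "pochhammer (j + 1) K > (0::nat)" by (rule pochhammer_pos) simp
      then have "pochhammer (of_nat j + 1 :: complex) K \<noteq> 0" unfolding e1 by simp
      then show ?thesis by (simp add: pdpow c_def)
    qed
    have "pv N ((pd ^^ K) c) x = (\<Sum>i\<le>N. if i \<in> {..N0} then E i * of_real x ^ i else 0)"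
      unfolding pv_def cK by (intro sum.cong) auto
    also have "\<dots> = (\<Sum>i\<in>{..N} \<inter> {..N0}. E i * of_real x ^ i)" by (rule sum.inter_restrict[symmetric]) simp
    also have "{..N} \<inter> {..N0} = {..N0}" by (auto simp: N_def)
    finally show ?thesis .
  qed
  have p0: "pv N ((pd ^^ i) c) 0 = D i 0" if "i < K" for i
  proof -
    have "pv N ((pd ^^ i) c) 0 = (pd ^^ i) c 0"
      unfolding pv_def by (subst sum.atMost_shift) simp
    also have "\<dots> = D i 0" using that by (simp add: pdpow c_def pochhammer_fact[symmetric])
    finally show ?thesis .
  qed
  have bK: "norm (G K x) \<le> e" if "x \<in> {0..1}" for x
    using q[OF that] by (simp add: G_def pK)
  have main: "\<forall>x\<in>{0..1}. norm (G (K - m) x) \<le> e" if "m \<le> K" for m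
    using that
  proof (induction m)
    case 0 then show ?case using bK by simp
  next
    case (Suc m)
    have eq: "Suc (K - Suc m) = K - m" using Suc.prems by simp
    show ?case
    proof
      fix x :: real assume x: "x \<in> {0..1}"
      show "norm (G (K - Suc m) x) \<le> e"
      proof (rule mvt_step[OF dG _ _ x])
        show "norm (G (Suc (K - Suc m)) y) \<le> e" if "y \<in> {0..1}" for y
          using Suc.IH Suc.prems that unfolding eq by auto
        show "G (K - Suc m) 0 = 0" using p0[of "K - Suc m"] Suc.prems by (simp add: G_def)
      qed
    qed
  qed
  show ?thesis
  proof (rule that[OF supp])
    fix i and x :: real assume "i \<le> K" "x \<in> {0..1}"
    then show "norm (D i x - pv N ((pd ^^ i) c) x) \<le> e"
      using main[of "K - i"] by (simp add: G_def)
  qed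
qed



definition nO :: "complex \<Rightarrow> nat" where "nO t = NN t (- t)"
definition nI :: "complex \<Rightarrow> nat" where "nI t = NN 1 (t - 2)"
definition KK :: "complex \<Rightarrow> nat" where "KK t = nO t + nI t"
definition CI :: "complex \<Rightarrow> real" where
  "CI t = (\<Sum>k\<le>nO t. norm (pochhammer 2 k :: complex) * BJ (nI t) (1 + of_nat k) (t - 2))"
definition CC :: "complex \<Rightarrow> real" where "CC t = BJ (nO t) t (- t) * CI t"

lemma T_bound:
  assumes D: "dseq Dg" and e: "e \<ge> 0"
    and bd: "\<And>i x. i \<le> KK t \<Longrightarrow> x \<in> {0..1} \<Longrightarrow> norm (Dg i x) \<le> e"
  shows "norm (phi2 t (- t) (\<lambda>y. phi2 1 (t - 2) (\<lambda>u. Dg 0 (y * u)))) \<le> CC t * e"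
proof -
  have F: "dseq (FF 1 (t - 2) Dg)" by (rule dseq_FF[OF D])
  have nO: "nO t \<ge> 2" "Re t > 1 - real (nO t)" "Re (- t) > 1 - real (nO t)"
    using NN_ge[of t "- t"] by (auto simp: nO_def)
  have nI: "nI t \<ge> 2" "Re (t - 2) > 1 - real (nI t)"
    using NN_ge[of 1 "t - 2"] by (auto simp: nI_def)
  have "norm (phi2 t (- t) (FF 1 (t - 2) Dg 0)) \<le> BJ (nO t) t (- t) * (CI t * e)"
  proof (rule phi2_bound[OF F nO])
    fix j and y :: real assume j: "j \<le> nO t" and y: "y \<in> {0..1}"
    have "norm (FF 1 (t - 2) Dg j y) \<le> norm (pochhammer (1 + 1) j :: complex) * BJ (nI t) (1 + of_nat j) (t - 2) * e"
    proof (rule FF_bound[OF D nI(1) _ nI(2) y])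
      show "1 - real (nI t) < Re (1 + of_nat j)" using nI(1) by simp
      show "norm (Dg i x) \<le> e" if "i \<le> j + nI t" "x \<in> {0..1}" for i x
        by (rule bd) (use that j in \<open>auto simp: KK_def\<close>)
    qed
    also have "\<dots> \<le> CI t * e"
    proof (rule mult_right_mono[OF _ e])
      have "norm (pochhammer 2 j :: complex) * BJ (nI t) (1 + of_nat j) (t - 2) \<le> CI t"
        unfolding CI_def by (rule member_le_sum) (use j in \<open>auto intro!: mult_nonneg_nonneg BJ_nonneg\<close>)
      then show "norm (pochhammer (1 + 1) j :: complex) * BJ (nI t) (1 + of_nat j) (t - 2) \<le> CI t"
        by (simp only: one_add_one)
    qed
    finally show "norm (FF 1 (t - 2) Dg j y) \<le> CI t * e" .
  qed
  then show ?thesis by (simp add: FF_0 CC_def mult_ac)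
qed

lemma rGamma_2: "rGamma (2::complex) = 1"
  using rGamma_plus1[of "1::complex"] by simp

lemma T_poly: "phi2 t (- t) (\<lambda>y. phi2 1 (t - 2) (\<lambda>u. pv N c (y * u))) = rGamma (t + 1) * pv N c 1"
proof -
  have in1: "phi2 1 (t - 2) (Dpow i 0) = pochhammer 2 i * rGamma (t + of_nat i + 1)" for i
  proof -
    have e: "(1::complex) + (t - 2) + of_nat i + 2 = t + of_nat i + 1" by simp
    show ?thesis using phi2_pow[of 1 "t - 2" i] unfolding e one_add_one Dpow_0 .
  qed
  have inner: "phi2 1 (t - 2) (\<lambda>u. pv N c (y * u)) =
      (\<Sum>i\<le>N. (c i * (pochhammer 2 i * rGamma (t + of_nat i + 1))) * Dpow i 0 y)" for y
  proof -
    have "(\<lambda>u. pv N c (y * u)) = (\<lambda>u. \<Sum>i\<le>N. (c i * of_real y ^ i) * Dpow i 0 u)"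
      by (simp add: pv_def Dpow_0 power_mult_distrib mult_ac fun_eq_iff)
    then have "phi2 1 (t - 2) (\<lambda>u. pv N c (y * u)) = (\<Sum>i\<le>N. (c i * of_real y ^ i) * phi2 1 (t - 2) (Dpow i 0))"
      using phi2_sum[of "{..N}" Dpow 1 "t - 2" "\<lambda>i. c i * of_real y ^ i"] dseq_Dpow by simp
    then show ?thesis by (simp add: in1[unfolded Dpow_0] Dpow_0 mult_ac)
  qed
  have out1: "phi2 t (- t) (Dpow i 0) = pochhammer (t + 1) i * rGamma (of_nat i + 2)" for i
  proof -
    have e: "t + - t + of_nat i + 2 = of_nat i + 2" by simp
    show ?thesis using phi2_pow[of t "- t" i] unfolding e Dpow_0 .
  qed
  have key: "(c i * (pochhammer 2 i * rGamma (t + of_nat i + 1))) * (pochhammer (t + 1) i * rGamma (of_nat i + 2))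
      = c i * rGamma (t + 1)" for i
  proof -
    have k1: "pochhammer (t + 1) i * rGamma (t + of_nat i + 1) = rGamma (t + 1)"
      using pochhammer_rGamma[of "t + 1" i] by (simp add: add_ac)
    have k2: "pochhammer 2 i * rGamma (of_nat i + 2) = (1::complex)"
      using pochhammer_rGamma[of "2::complex" i] rGamma_2 by (simp add: add_ac)
    have "(c i * (pochhammer 2 i * rGamma (t + of_nat i + 1))) * (pochhammer (t + 1) i * rGamma (of_nat i + 2))
        = c i * (pochhammer (t + 1) i * rGamma (t + of_nat i + 1)) * (pochhammer 2 i * rGamma (of_nat i + 2))"
      by (simp add: mult_ac)
    then show ?thesis by (simp add: k1 k2)
  qed
  have "phi2 t (- t) (\<lambda>y. phi2 1 (t - 2) (\<lambda>u. pv N c (y * u)))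
      = phi2 t (- t) (\<lambda>y. \<Sum>i\<le>N. (c i * (pochhammer 2 i * rGamma (t + of_nat i + 1))) * Dpow i 0 y)"
    by (simp add: inner)
  also have "\<dots> = (\<Sum>i\<le>N. (c i * (pochhammer 2 i * rGamma (t + of_nat i + 1))) * phi2 t (- t) (Dpow i 0))"
    by (rule phi2_sum) (simp_all add: dseq_Dpow)
  also have "\<dots> = (\<Sum>i\<le>N. c i * rGamma (t + 1))"
    by (intro sum.cong refl) (simp add: out1 key)
  also have "\<dots> = rGamma (t + 1) * pv N c 1"
    by (simp add: pv_def sum_distrib_left mult_ac)
  finally show ?thesis .
qed

lemma zero_by_eps:
  fixes z :: complex
  assumes "\<And>e. e > 0 \<Longrightarrow> norm z \<le> B * e"
  shows "z = 0"
proof -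
  have "norm z \<le> 0 + d" if d: "d > 0" for d
  proof (cases "B > 0")
    case True
    have "norm z \<le> B * (d / B)" using assms[of "d / B"] d True by simp
    then show ?thesis using True by simp
  next
    case False
    have "norm z \<le> B * 1" using assms[of 1] by simp
    then show ?thesis using False d by simp
  qed
  then have "norm z \<le> 0" by (rule field_le_epsilon)
  then show ?thesis by simp
qed

theorem lemma5p7:
  fixes t :: complex and \<psi> :: "real \<Rightarrow> complex"
  assumes "test_fun \<psi>"
  shows "pconv (phi2 t (- t)) (phi2 1 (t - 2)) \<psi> = rGamma (t + 1) * \<psi> 1"
proof -
  obtain D\<psi> where D: "dseq D\<psi>" "D\<psi> 0 = \<psi>"
    using assms unfolding test_fun_def smooth_fun_dseq by blast
  define T where "T = phi2 t (- t) (\<lambda>y. phi2 1 (t - 2) (\<lambda>u. \<psi> (y * u)))"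
  have lhs: "pconv (phi2 t (- t)) (phi2 1 (t - 2)) \<psi> = T" by (simp add: pconv_def T_def)
  have "T - rGamma (t + 1) * \<psi> 1 = 0"
  proof (rule zero_by_eps)
    fix e :: real assume e: "e > 0"
    obtain N c where supp: "\<forall>j>N. c j = 0"
      and ap: "\<And>i x. i \<le> KK t \<Longrightarrow> x \<in> {0..1} \<Longrightarrow> norm (D\<psi> i x - pv N ((pd ^^ i) c) x) \<le> e"
      using poly_approx[OF D(1) e] by blast
    define P where "P = (\<lambda>i. pv N ((pd ^^ i) c))"
    have dP: "dseq P" unfolding P_def by (rule dseq_pv[OF supp])
    define G where "G = (\<lambda>i x. D\<psi> i x - P i x)"
    have dG: "dseq G" unfolding G_def by (rule dseq_diff[OF D(1) dP])
    have bdG: "\<And>i x. i \<le> KK t \<Longrightarrow> x \<in> {0..1} \<Longrightarrow> norm (G i x) \<le> e"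
      using ap by (simp add: G_def P_def)
    have split: "phi2 1 (t - 2) (\<lambda>u. \<psi> (y * u)) = FF 1 (t - 2) G 0 y + FF 1 (t - 2) P 0 y" for y
    proof -
      have "(\<lambda>u. \<psi> (y * u)) = (\<lambda>u. Zs G y 0 u + Zs P y 0 u)"
        by (simp add: Zs_def G_def D(2) fun_eq_iff)
      then have "phi2 1 (t - 2) (\<lambda>u. \<psi> (y * u)) = phi2 1 (t - 2) (Zs G y 0) + phi2 1 (t - 2) (Zs P y 0)"
        using phi2_add[OF dseq_Zs[OF dG] dseq_Zs[OF dP], of 1 "t - 2"] by simp
      then show ?thesis by (simp add: FF_0 Zs_0)
    qed
    have "T = phi2 t (- t) (\<lambda>y. FF 1 (t - 2) G 0 y + FF 1 (t - 2) P 0 y)"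
      unfolding T_def split ..
    also have "\<dots> = phi2 t (- t) (FF 1 (t - 2) G 0) + phi2 t (- t) (FF 1 (t - 2) P 0)"
      by (rule phi2_add[OF dseq_FF[OF dG] dseq_FF[OF dP]])
    finally have Tsplit: "T = phi2 t (- t) (FF 1 (t - 2) G 0) + phi2 t (- t) (FF 1 (t - 2) P 0)" .
    have A: "norm (phi2 t (- t) (FF 1 (t - 2) G 0)) \<le> CC t * e"
      using T_bound[OF dG less_imp_le[OF e] bdG] by (simp add: FF_0)
    have B: "phi2 t (- t) (FF 1 (t - 2) P 0) = rGamma (t + 1) * P 0 1"
      using T_poly[of t N c] by (simp add: FF_0 P_def)
    have psi1: "\<psi> 1 = G 0 1 + P 0 1" by (simp add: G_def D(2))
    have g1: "norm (G 0 1) \<le> e" using bdG[of 0 1] by simp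
    have "T - rGamma (t + 1) * \<psi> 1 = phi2 t (- t) (FF 1 (t - 2) G 0) - rGamma (t + 1) * G 0 1"
      using Tsplit B psi1 by (simp add: algebra_simps)
    also have "norm \<dots> \<le> norm (phi2 t (- t) (FF 1 (t - 2) G 0)) + norm (rGamma (t + 1)) * norm (G 0 1)"
      using norm_triangle_ineq4[of "phi2 t (- t) (FF 1 (t - 2) G 0)" "rGamma (t + 1) * G 0 1"] by (simp add: norm_mult)
    also have "\<dots> \<le> CC t * e + norm (rGamma (t + 1)) * e"
      by (intro add_mono A mult_left_mono g1) auto
    also have "\<dots> = (CC t + norm (rGamma (t + 1))) * e" by (simp add: algebra_simps)
    finally show "norm (T - rGamma (t + 1) * \<psi> 1) \<le> (CC t + norm (rGamma (t + 1))) * e" .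
  qed
  then show ?thesis using lhs by simp
qed

end
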